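(* Let $\mathsf{X}$ be a finite connected graph with no tails and with $l$ ramified vertices, having a segment decomposition with segments $\mathsf{S}^1,\dots,\mathsf{S}^k$, $\mathsf{S}^i$ having $t_i$ ramified vertices. Let $\mathsf{X}_n$ be the $n$-th layer of a $\mathbb{Z}_p$-cover of $\mathsf{X}$ (given by an arbitrary voltage assignment) such that all ramified vertices are totally ramified, and let $\mathsf{S}^i_n$ be the preimage of $\mathsf{S}^i$ in $\mathsf{X}_n$. Then \[\kappa(\mathsf{X}_n)=\sum_{I\ \text{admissible}}\ \prod_{i\in I}\kappa(\mathsf{S}^i_n)\prod_{i\notin I}F_{t_i}(\mathsf{S}^i_n).\]
   Context: Graphs are finite and undirected, possibly with multiple edges and loops; $\kappa$ = number of spanning trees. Tails, admissible paths, segment decompositions: a tail is an unramified vertex with exactly one neighbour joined by exactly one edge; an admissible path between ramified $v,v'$ has all intermediate vertices unramified. Admissible paths between distinct ramified vertices sharing an edge are grouped together; a decomposition requires each group to join one pair of ramified vertices, and groups give the 2-segments; the remaining edges lie on admissible closed paths at a single ramified vertex outside the 2-segments, grouped likewise into 1-segments; segments are edge-disjoint, share no unramified vertex and cover $\mathsf{X}$. $F_t(\mathsf{S})$ ($t\in\{1,2\}$) is the number of spanning forests of $\mathsf{S}$ with $t$ trees each containing exactly one ramified vertex (in $\mathsf{S}^i_n$ the ramified vertices are the unique preimages of those of $\mathsf{S}^i$). A subset $I$ of the indices of 2-segments with $|I|=l-1$ is admissible if there is a spanning tree $\mathsf{T}$ of $\mathsf{X}$ such that $\mathsf{T}\cap\mathsf{S}^i$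 is a spanning tree of $\mathsf{S}^i$ for all $i\in I$. Tower: $\Gamma\cong\mathbb{Z}_p$, $\Gamma_n=\Gamma/\Gamma^{p^n}$; voltage assignment $\alpha$ from directed edges to $\Gamma$ with $\alpha(\bar e)=\alpha(e)^{-1}$; closed subgroups $I_v$ with $I_v=\Gamma$ for ramified $v$ and $I_v=1$ otherwise; $\mathsf{X}_n$ has vertices $\bigsqcup_v\{v\}\times\Gamma_n/\pi_n(I_v)$ and directed edges $\mathbf{E}(\mathsf{X})\times\Gamma_n$, $(e,g)$ joining $(o(e),g\pi_n(I_{o(e)}))$ to $(t(e),g\pi_n(\alpha(e))\pi_n(I_{t(e)}))$; all $\mathsf{X}_n$ connected. *)

theory Defs
  imports Main "HOL-Computational_Algebra.Primes"
begin

text \<open>Finite undirected multigraphs (loops and multiple edges allowed).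
  A graph is given by a vertex set V, an edge set E and a map ends assigning
  to every edge a chosen orientation (origin, terminus).\<close>

definition graph :: "'v set \<Rightarrow> 'e set \<Rightarrow> ('e \<Rightarrow> 'v \<times> 'v) \<Rightarrow> bool" where
  "graph V E ends \<longleftrightarrow> finite V \<and> finite E \<and>
     (\<forall>e\<in>E. fst (ends e) \<in> V \<and> snd (ends e) \<in> V)"

definition joins :: "('e \<Rightarrow> 'v \<times> 'v) \<Rightarrow> 'e \<Rightarrow> 'v \<Rightarrow> 'v \<Rightarrow> bool" where
  "joins ends e a b \<longleftrightarrow> ends e = (a, b) \<or> ends e = (b, a)"

definition adj :: "('e \<Rightarrow> 'v \<times> 'v) \<Rightarrow> 'e set \<Rightarrow> ('v \<times> 'v) set" where
  "adj ends F = {(a, b). \<exists>e\<in>F. joins ends e a b}"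

definition connected_graph :: "'v set \<Rightarrow> 'e set \<Rightarrow> ('e \<Rightarrow> 'v \<times> 'v) \<Rightarrow> bool" where
  "connected_graph V F ends \<longleftrightarrow> V \<noteq> {} \<and> (\<forall>a\<in>V. \<forall>b\<in>V. (a, b) \<in> (adj ends F)\<^sup>*)"

text \<open>An edge set is acyclic (a forest) iff no edge lies on a cycle, i.e. the ends of
  every edge are not connected by the remaining edges (loops are thus excluded).\<close>
definition acyclic_edges :: "('e \<Rightarrow> 'v \<times> 'v) \<Rightarrow> 'e set \<Rightarrow> bool" where
  "acyclic_edges ends F \<longleftrightarrow>
     (\<forall>e\<in>F. (fst (ends e), snd (ends e)) \<notin> (adj ends (F - {e}))\<^sup>*)"

definition spanning_tree :: "'v set \<Rightarrow> 'e set \<Rightarrow> ('e \<Rightarrow> 'v \<times> 'v) \<Rightarrow> 'e set \<Rightarrow> bool" where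
  "spanning_tree V E ends T \<longleftrightarrow> T \<subseteq> E \<and> connected_graph V T ends \<and> acyclic_edges ends T"

definition kappa :: "'v set \<Rightarrow> 'e set \<Rightarrow> ('e \<Rightarrow> 'v \<times> 'v) \<Rightarrow> nat" where
  "kappa V E ends = card {T. spanning_tree V E ends T}"

definition components :: "'v set \<Rightarrow> ('e \<Rightarrow> 'v \<times> 'v) \<Rightarrow> 'e set \<Rightarrow> 'v set set" where
  "components V ends F = (\<lambda>v. {w \<in> V. (v, w) \<in> (adj ends F)\<^sup>*}) ` V"

definition F_forests :: "'v set \<Rightarrow> 'e set \<Rightarrow> ('e \<Rightarrow> 'v \<times> 'v) \<Rightarrow> 'v set \<Rightarrow> nat \<Rightarrow> nat" where
  "F_forests V E ends Rv t = card {F. F \<subseteq> E \<and> acyclic_edges ends F \<and>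
       card (components V ends F) = t \<and>
       (\<forall>C\<in>components V ends F. card (C \<inter> Rv) = 1)}"

definition verts :: "('e \<Rightarrow> 'v \<times> 'v) \<Rightarrow> 'e set \<Rightarrow> 'v set" where
  "verts ends S = fst ` ends ` S \<union> snd ` ends ` S"

definition has_tail :: "'v set \<Rightarrow> 'e set \<Rightarrow> ('e \<Rightarrow> 'v \<times> 'v) \<Rightarrow> 'v set \<Rightarrow> bool" where
  "has_tail V E ends R \<longleftrightarrow> (\<exists>v\<in>V - R. \<exists>e\<in>E.
      {e'\<in>E. fst (ends e') = v \<or> snd (ends e') = v} = {e} \<and> fst (ends e) \<noteq> snd (ends e))"

definition is_walk :: "'e set \<Rightarrow> ('e \<Rightarrow> 'v \<times> 'v) \<Rightarrow> 'v list \<Rightarrow> 'e list \<Rightarrow> bool" where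
  "is_walk E ends vs es \<longleftrightarrow> length vs = Suc (length es) \<and>
     (\<forall>i < length es. es ! i \<in> E \<and> joins ends (es ! i) (vs ! i) (vs ! Suc i))"

definition AP2 :: "'e set \<Rightarrow> ('e \<Rightarrow> 'v \<times> 'v) \<Rightarrow> 'v set \<Rightarrow> ('v list \<times> 'e list) set" where
  "AP2 E ends R = {(vs, es). is_walk E ends vs es \<and> es \<noteq> [] \<and>
      hd vs \<in> R \<and> last vs \<in> R \<and> hd vs \<noteq> last vs \<and> distinct vs \<and>
      (\<forall>i. 0 < i \<and> i < length es \<longrightarrow> vs ! i \<notin> R)}"

definition APc :: "'e set \<Rightarrow> ('e \<Rightarrow> 'v \<times> 'v) \<Rightarrow> 'v set \<Rightarrow> ('v list \<times> 'e list) set" where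
  "APc E ends R = {(vs, es). is_walk E ends vs es \<and> es \<noteq> [] \<and>
      hd vs \<in> R \<and> last vs = hd vs \<and> distinct (tl vs) \<and> distinct es \<and>
      (\<forall>i. 0 < i \<and> i < length es \<longrightarrow> vs ! i \<notin> R)}"

definition share_rel :: "('v list \<times> 'e list) set \<Rightarrow> (('v list \<times> 'e list) \<times> ('v list \<times> 'e list)) set" where
  "share_rel P = {(A, B). A \<in> P \<and> B \<in> P \<and> set (snd A) \<inter> set (snd B) \<noteq> {}}"

definition path_group :: "('v list \<times> 'e list) set \<Rightarrow> ('v list \<times> 'e list) \<Rightarrow> ('v list \<times> 'e list) set" where
  "path_group P A = {B. (A, B) \<in> (share_rel P)\<^sup>*}"

definition group_edges :: "('v list \<times> 'e list) set \<Rightarrow> 'e set" where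
  "group_edges G = (\<Union>B\<in>G. set (snd B))"

definition path_ends :: "('v list \<times> 'e list) \<Rightarrow> 'v set" where
  "path_ends A = {hd (fst A), last (fst A)}"

definition seg2 :: "'e set \<Rightarrow> ('e \<Rightarrow> 'v \<times> 'v) \<Rightarrow> 'v set \<Rightarrow> 'e set set" where
  "seg2 E ends R = (\<lambda>A. group_edges (path_group (AP2 E ends R) A)) ` AP2 E ends R"

definition AP1 :: "'e set \<Rightarrow> ('e \<Rightarrow> 'v \<times> 'v) \<Rightarrow> 'v set \<Rightarrow> ('v list \<times> 'e list) set" where
  "AP1 E ends R = {A \<in> APc E ends R. set (snd A) \<inter> \<Union>(seg2 E ends R) = {}}"

definition seg1 :: "'e set \<Rightarrow> ('e \<Rightarrow> 'v \<times> 'v) \<Rightarrow> 'v set \<Rightarrow> 'e set set" where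
  "seg1 E ends R = (\<lambda>A. group_edges (path_group (AP1 E ends R) A)) ` AP1 E ends R"

definition segs :: "'e set \<Rightarrow> ('e \<Rightarrow> 'v \<times> 'v) \<Rightarrow> 'v set \<Rightarrow> 'e set set" where
  "segs E ends R = seg2 E ends R \<union> seg1 E ends R"

definition segment_decomposition :: "'v set \<Rightarrow> 'e set \<Rightarrow> ('e \<Rightarrow> 'v \<times> 'v) \<Rightarrow> 'v set \<Rightarrow> bool" where
  "segment_decomposition V E ends R \<longleftrightarrow>
     (\<forall>A\<in>AP2 E ends R. \<forall>B\<in>path_group (AP2 E ends R) A. path_ends B = path_ends A) \<and>
     (\<forall>A\<in>AP1 E ends R. \<forall>B\<in>path_group (AP1 E ends R) A. hd (fst B) = hd (fst A)) \<and>
     (\<forall>S\<in>segs E ends R. \<forall>S'\<in>segs E ends R. S \<noteq> S' \<longrightarrow>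
         S \<inter> S' = {} \<and> verts ends S \<inter> verts ends S' \<subseteq> R) \<and>
     \<Union>(segs E ends R) = E \<and> \<Union>(verts ends ` segs E ends R) = V"

text \<open>Elements of Z_p as compatible sequences of residues; pi_n(a) = a n \<in> {0..<p^n} = Gamma_n.\<close>
definition zp_elem :: "nat \<Rightarrow> (nat \<Rightarrow> nat) \<Rightarrow> bool" where
  "zp_elem p a \<longleftrightarrow> (\<forall>n. a n < p ^ n \<and> a (Suc n) mod p ^ n = a n)"

text \<open>The n-th layer X_n: a vertex v with I_v = Gamma (v \<in> R) has the single preimage
  (v,0); an unramified v has preimages (v,g), g \<in> Gamma_n. Edge (e,g) joins
  (o(e), g I_o(e)) to (t(e), (g + alpha(e)) I_t(e)).\<close>
definition cls :: "'v set \<Rightarrow> nat \<Rightarrow> nat \<Rightarrow> 'v \<Rightarrow> nat \<Rightarrow> 'v \<times> nat" where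
  "cls R p n v g = (if v \<in> R then (v, 0) else (v, g mod p ^ n))"

definition cover_V :: "'v set \<Rightarrow> 'v set \<Rightarrow> nat \<Rightarrow> nat \<Rightarrow> ('v \<times> nat) set" where
  "cover_V V R p n = {cls R p n v g | v g. v \<in> V \<and> g < p ^ n}"

definition cover_E :: "'e set \<Rightarrow> nat \<Rightarrow> nat \<Rightarrow> ('e \<times> nat) set" where
  "cover_E E p n = E \<times> {..<p ^ n}"

definition cover_ends :: "('e \<Rightarrow> 'v \<times> 'v) \<Rightarrow> 'v set \<Rightarrow> ('e \<Rightarrow> nat \<Rightarrow> nat) \<Rightarrow> nat \<Rightarrow> nat
    \<Rightarrow> ('e \<times> nat) \<Rightarrow> ('v \<times> nat) \<times> ('v \<times> nat)" where
  "cover_ends ends R \<alpha> p n = (\<lambda>(e, g).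
      (cls R p n (fst (ends e)) g, cls R p n (snd (ends e)) (g + \<alpha> e n)))"

definition seg_cover_V :: "'v set \<Rightarrow> ('e \<Rightarrow> 'v \<times> 'v) \<Rightarrow> 'v set \<Rightarrow> nat \<Rightarrow> nat \<Rightarrow> 'e set \<Rightarrow> ('v \<times> nat) set" where
  "seg_cover_V V ends R p n S = {x \<in> cover_V V R p n. fst x \<in> verts ends S}"

definition admissible :: "'v set \<Rightarrow> 'e set \<Rightarrow> ('e \<Rightarrow> 'v \<times> 'v) \<Rightarrow> 'v set \<Rightarrow> 'e set set \<Rightarrow> bool" where
  "admissible V E ends R I \<longleftrightarrow> I \<subseteq> seg2 E ends R \<and> card I = card R - 1 \<and>
     (\<exists>T. spanning_tree V E ends T \<and>
        (\<forall>S\<in>I. spanning_tree (verts ends S) S ends (T \<inter> S)))"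

end

theory Submission
  imports Defs "HOL-Library.FuncSet"
begin

lemma joins_sym: "joins ends e a b \<longleftrightarrow> joins ends e b a"
  unfolding joins_def by auto

lemma adj_sym: "(a, b) \<in> adj ends F \<Longrightarrow> (b, a) \<in> adj ends F"
  unfolding adj_def joins_def by auto

lemma adj_mono: "F \<subseteq> G \<Longrightarrow> adj ends F \<subseteq> adj ends G"
  unfolding adj_def by auto

lemma rt_mono: "F \<subseteq> G \<Longrightarrow> (x, y) \<in> (adj ends F)\<^sup>* \<Longrightarrow> (x, y) \<in> (adj ends G)\<^sup>*"
  by (meson adj_mono rtrancl_mono subsetD)

lemma rt_sym: "(x, y) \<in> (adj ends F)\<^sup>* \<Longrightarrow> (y, x) \<in> (adj ends F)\<^sup>*"
proof (induction rule: rtrancl_induct)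
  case base then show ?case by simp
next
  case (step y z)
  then show ?case using adj_sym
    by (meson converse_rtrancl_into_rtrancl)
qed

lemma edge_rt: "e \<in> F \<Longrightarrow> (fst (ends e), snd (ends e)) \<in> (adj ends F)\<^sup>*"
  unfolding adj_def joins_def by (auto intro!: r_into_rtrancl)

lemma adj_insert: "adj ends (insert e F) = adj ends F \<union> {(fst (ends e), snd (ends e)), (snd (ends e), fst (ends e))}"
  unfolding adj_def joins_def by (auto simp: prod_eq_iff)

lemma rt_insert_rel:
  assumes "(x, y) \<in> (r \<union> {(a, b), (b, a)})\<^sup>*"
  shows "(x, y) \<in> r\<^sup>* \<or> ((x, a) \<in> r\<^sup>* \<and> (b, y) \<in> r\<^sup>*) \<or> ((x, b) \<in> r\<^sup>* \<and> (a, y) \<in> r\<^sup>*)"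
  using assms
proof (induction rule: rtrancl_induct)
  case base then show ?case by simp
next
  case (step y z)
  from step.hyps(2) consider "(y, z) \<in> r" | "y = a" "z = b" | "y = b" "z = a" by auto
  then show ?case
  proof cases
    case 1 then show ?thesis using step.IH by (meson rtrancl.rtrancl_into_rtrancl)
  next
    case 2
    then have "(x, a) \<in> r\<^sup>* \<or> (x, b) \<in> r\<^sup>*" using step.IH by auto
    then show ?thesis using 2 by auto
  next
    case 3
    then have "(x, a) \<in> r\<^sup>* \<or> (x, b) \<in> r\<^sup>*" using step.IH by auto
    then show ?thesis using 3 by auto
  qed
qed

lemma rt_insert:
  assumes "(x, y) \<in> (adj ends (insert e F))\<^sup>*"
  shows "(x, y) \<in> (adj ends F)\<^sup>* \<or> ((x, fst (ends e)) \<in> (adj ends F)\<^sup>* \<and> (snd (ends e), y) \<in> (adj ends F)\<^sup>*)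
     \<or> ((x, snd (ends e)) \<in> (adj ends F)\<^sup>* \<and> (fst (ends e), y) \<in> (adj ends F)\<^sup>*)"
  using rt_insert_rel[of x y "adj ends F"] assms adj_insert[of ends e F] by simp

lemma rt_insert_same:
  assumes "(fst (ends e), snd (ends e)) \<in> (adj ends F)\<^sup>*"
  shows "(adj ends (insert e F))\<^sup>* = (adj ends F)\<^sup>*"
proof
  show "(adj ends (insert e F))\<^sup>* \<subseteq> (adj ends F)\<^sup>*"
  proof (rule rtrancl_subset_rtrancl)
    show "adj ends (insert e F) \<subseteq> (adj ends F)\<^sup>*"
      using assms rt_sym[OF assms] unfolding adj_insert by (auto simp del: rtrancl_eq_or_trancl)
  qed
  show "(adj ends F)\<^sup>* \<subseteq> (adj ends (insert e F))\<^sup>*"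
    by (simp add: adj_mono rtrancl_mono subset_insertI)
qed

lemma acyclic_mono: "G \<subseteq> H \<Longrightarrow> acyclic_edges ends H \<Longrightarrow> acyclic_edges ends G"
  unfolding acyclic_edges_def
proof
  fix f assume G: "G \<subseteq> H" and H: "\<forall>e\<in>H. (fst (ends e), snd (ends e)) \<notin> (adj ends (H - {e}))\<^sup>*" and f: "f \<in> G"
  have "G - {f} \<subseteq> H - {f}" using G by auto
  then show "(fst (ends f), snd (ends f)) \<notin> (adj ends (G - {f}))\<^sup>*"
    using H f rt_mono[OF \<open>G - {f} \<subseteq> H - {f}\<close>, of "fst (ends f)" "snd (ends f)" ends] G by blast
qed

lemma acyclic_empty: "acyclic_edges ends {}"
  unfolding acyclic_edges_def by simp

lemma acyclic_insert:
  assumes "(fst (ends e), snd (ends e)) \<notin> (adj ends F)\<^sup>*" "acyclic_edges ends F" "e \<notin> F"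
  shows "acyclic_edges ends (insert e F)"
  unfolding acyclic_edges_def
proof
  fix f assume f: "f \<in> insert e F"
  show "(fst (ends f), snd (ends f)) \<notin> (adj ends (insert e F - {f}))\<^sup>*"
  proof (cases "f = e")
    case True
    then show ?thesis using assms by (simp add: insert_Diff_if)
  next
    case False
    then have fF: "f \<in> F" using f by auto
    have eq: "insert e F - {f} = insert e (F - {f})" using False by auto
    show ?thesis
    proof
      assume "(fst (ends f), snd (ends f)) \<in> (adj ends (insert e F - {f}))\<^sup>*"
      then have h: "(fst (ends f), snd (ends f)) \<in> (adj ends (insert e (F - {f})))\<^sup>*" using eq by simp
      have nf: "(fst (ends f), snd (ends f)) \<notin> (adj ends (F - {f}))\<^sup>*"
        using assms(2) fF unfolding acyclic_edges_def by auto
      have sub: "F - {f} \<subseteq> F" by auto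
      have ff: "(fst (ends f), snd (ends f)) \<in> (adj ends F)\<^sup>*" using edge_rt[OF fF] .
      from rt_insert[OF h] nf consider
        "(fst (ends f), fst (ends e)) \<in> (adj ends (F - {f}))\<^sup>*" "(snd (ends e), snd (ends f)) \<in> (adj ends (F - {f}))\<^sup>*"
        | "(fst (ends f), snd (ends e)) \<in> (adj ends (F - {f}))\<^sup>*" "(fst (ends e), snd (ends f)) \<in> (adj ends (F - {f}))\<^sup>*"
        by blast
      then show False
      proof cases
        case 1
        then have a: "(fst (ends e), fst (ends f)) \<in> (adj ends F)\<^sup>*" "(snd (ends f), snd (ends e)) \<in> (adj ends F)\<^sup>*"
          using rt_mono[OF sub] rt_sym by metis+
        then have "(fst (ends e), snd (ends e)) \<in> (adj ends F)\<^sup>*" using ff by (meson rtrancl_trans)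
        then show False using assms(1) by simp
      next
        case 2
        then have a: "(fst (ends e), snd (ends f)) \<in> (adj ends F)\<^sup>*" "(fst (ends f), snd (ends e)) \<in> (adj ends F)\<^sup>*"
          using rt_mono[OF sub 2(2)] rt_mono[OF sub 2(1)] by auto
        have "(snd (ends f), fst (ends f)) \<in> (adj ends F)\<^sup>*" using rt_sym[OF ff] .
        then have "(fst (ends e), snd (ends e)) \<in> (adj ends F)\<^sup>*" using a by (meson rtrancl_trans)
        then show False using assms(1) by simp
      qed
    qed
  qed
qed

lemma acyclic_insert_iff:
  assumes "(fst (ends e), snd (ends e)) \<notin> (adj ends F)\<^sup>*" "e \<notin> F"
  shows "acyclic_edges ends (insert e F) \<longleftrightarrow> acyclic_edges ends F"
  using acyclic_insert[OF assms(1) _ assms(2)] acyclic_mono[of F "insert e F"] by blast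

lemma not_acyclic_insert:
  assumes "(fst (ends e), snd (ends e)) \<in> (adj ends F)\<^sup>*" "e \<notin> F"
  shows "\<not> acyclic_edges ends (insert e F)"
  using assms unfolding acyclic_edges_def by auto

definition compset :: "'v set \<Rightarrow> ('e \<Rightarrow> 'v \<times> 'v) \<Rightarrow> 'e set \<Rightarrow> 'v \<Rightarrow> 'v set" where
  "compset W ends F x = {w \<in> W. (x, w) \<in> (adj ends F)\<^sup>*}"

lemma components_compset: "components W ends F = compset W ends F ` W"
  unfolding components_def compset_def by simp

lemma compset_eq:
  assumes "(x, y) \<in> (adj ends F)\<^sup>*"
  shows "compset W ends F x = compset W ends F y"
proof -
  have "(x, w) \<in> (adj ends F)\<^sup>* \<longleftrightarrow> (y, w) \<in> (adj ends F)\<^sup>*" for w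
    using assms rt_sym[OF assms] rtrancl_trans[of x y "adj ends F" w] rtrancl_trans[of y x "adj ends F" w]
    by blast
  then show ?thesis unfolding compset_def by simp
qed

lemma compset_eqD:
  assumes "compset W ends F x = compset W ends F y" "y \<in> W"
  shows "(x, y) \<in> (adj ends F)\<^sup>*"
proof -
  have "y \<in> compset W ends F y" using assms(2) unfolding compset_def by simp
  then show ?thesis using assms(1) unfolding compset_def by auto
qed

lemma components_empty:
  assumes "finite W"
  shows "card (components W ends {}) = card W"
proof -
  have "adj ends {} = {}" unfolding adj_def by simp
  then have "compset W ends {} x = (if x \<in> W then {x} else {})" for x
    unfolding compset_def by auto
  then have "components W ends {} = (\<lambda>x. {x}) ` W"
    unfolding components_compset by auto
  then show ?thesis by (simp add: card_image)
qed

lemma components_merge: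
  assumes "finite W" "fst (ends e) \<in> W" "snd (ends e) \<in> W"
    "(fst (ends e), snd (ends e)) \<notin> (adj ends F)\<^sup>*"
  shows "card (components W ends (insert e F)) + 1 = card (components W ends F)"
proof -
  define a where "a = fst (ends e)"
  define b where "b = snd (ends e)"
  define c where "c = compset W ends F"
  define c' where "c' = compset W ends (insert e F)"
  have aW: "a \<in> W" and bW: "b \<in> W" and nab: "(a, b) \<notin> (adj ends F)\<^sup>*"
    using assms a_def b_def by auto
  define Oth where "Oth = c ` (W - (c a \<union> c b))"
  have rti: "(x, y) \<in> (adj ends (insert e F))\<^sup>* \<longleftrightarrow>
     (x, y) \<in> (adj ends F)\<^sup>* \<or> ((x, a) \<in> (adj ends F)\<^sup>* \<and> (b, y) \<in> (adj ends F)\<^sup>*)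
     \<or> ((x, b) \<in> (adj ends F)\<^sup>* \<and> (a, y) \<in> (adj ends F)\<^sup>*)" for x y
  proof
    assume "(x, y) \<in> (adj ends (insert e F))\<^sup>*"
    then show "(x, y) \<in> (adj ends F)\<^sup>* \<or> ((x, a) \<in> (adj ends F)\<^sup>* \<and> (b, y) \<in> (adj ends F)\<^sup>*)
     \<or> ((x, b) \<in> (adj ends F)\<^sup>* \<and> (a, y) \<in> (adj ends F)\<^sup>*)"
      using rt_insert a_def b_def by metis
  next
    have ab: "(a, b) \<in> (adj ends (insert e F))\<^sup>*" "(b, a) \<in> (adj ends (insert e F))\<^sup>*"
    proof -
      have ab1: "(a, b) \<in> (adj ends (insert e F))\<^sup>*" using edge_rt[of e "insert e F" ends] a_def b_def by simp
      then show "(a, b) \<in> (adj ends (insert e F))\<^sup>*" "(b, a) \<in> (adj ends (insert e F))\<^sup>*"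
        using rt_sym[OF ab1] by auto
    qed
    have m: "(u, v) \<in> (adj ends F)\<^sup>* \<Longrightarrow> (u, v) \<in> (adj ends (insert e F))\<^sup>*" for u v
      by (rule rt_mono[OF subset_insertI])
    assume "(x, y) \<in> (adj ends F)\<^sup>* \<or> ((x, a) \<in> (adj ends F)\<^sup>* \<and> (b, y) \<in> (adj ends F)\<^sup>*)
     \<or> ((x, b) \<in> (adj ends F)\<^sup>* \<and> (a, y) \<in> (adj ends F)\<^sup>*)"
    then show "(x, y) \<in> (adj ends (insert e F))\<^sup>*"
      using m ab by (meson rtrancl_trans)
  qed
  have inca: "x \<in> c a \<longleftrightarrow> x \<in> W \<and> (x, a) \<in> (adj ends F)\<^sup>*" for x
    unfolding c_def compset_def using rt_sym[of a x ends F] rt_sym[of x a ends F] by blast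
  have incb: "x \<in> c b \<longleftrightarrow> x \<in> W \<and> (x, b) \<in> (adj ends F)\<^sup>*" for x
    unfolding c_def compset_def using rt_sym[of b x ends F] rt_sym[of x b ends F] by blast
  have c'1: "c' x = c a \<union> c b" if "x \<in> c a \<union> c b" for x
  proof -
    have "(x, a) \<in> (adj ends F)\<^sup>* \<or> (x, b) \<in> (adj ends F)\<^sup>*" using that inca incb by auto
    then have "(x, w) \<in> (adj ends (insert e F))\<^sup>* \<longleftrightarrow>
       (a, w) \<in> (adj ends F)\<^sup>* \<or> (b, w) \<in> (adj ends F)\<^sup>*" for w
    proof -
      assume xab: "(x, a) \<in> (adj ends F)\<^sup>* \<or> (x, b) \<in> (adj ends F)\<^sup>*"
      show ?thesis
      proof
        assume "(x, w) \<in> (adj ends (insert e F))\<^sup>*"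
        then consider "(x, w) \<in> (adj ends F)\<^sup>*" | "(b, w) \<in> (adj ends F)\<^sup>*" | "(a, w) \<in> (adj ends F)\<^sup>*"
          using rti[of x w] by blast
        then show "(a, w) \<in> (adj ends F)\<^sup>* \<or> (b, w) \<in> (adj ends F)\<^sup>*"
        proof cases
          case 1
          then show ?thesis using xab rt_sym[of x a] rt_sym[of x b]
            rtrancl_trans[of a x "adj ends F" w] rtrancl_trans[of b x "adj ends F" w] by blast
        qed auto
      next
        assume "(a, w) \<in> (adj ends F)\<^sup>* \<or> (b, w) \<in> (adj ends F)\<^sup>*"
        then show "(x, w) \<in> (adj ends (insert e F))\<^sup>*"
          using xab rti[of x w] rtrancl_trans[of x a "adj ends F" w] rtrancl_trans[of x b "adj ends F" w] by blast
      qed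
    qed
    then show ?thesis
      unfolding c'_def c_def compset_def by auto
  qed
  have c'2: "c' x = c x" if "x \<notin> c a \<union> c b" "x \<in> W" for x
  proof -
    have "(x, a) \<notin> (adj ends F)\<^sup>* \<and> (x, b) \<notin> (adj ends F)\<^sup>*" using that inca incb by auto
    then have "(x, w) \<in> (adj ends (insert e F))\<^sup>* \<longleftrightarrow> (x, w) \<in> (adj ends F)\<^sup>*" for w
      using rti[of x w] by blast
    then show ?thesis
      unfolding c'_def c_def compset_def by auto
  qed
  have comp: "components W ends F = insert (c a) (insert (c b) Oth)"
  proof -
    have "c ` W = c ` (c a \<union> c b) \<union> Oth" unfolding Oth_def using aW bW
      unfolding c_def compset_def by auto
    moreover have "c ` (c a \<union> c b) = {c a, c b}"
    proof -
      have "c x = c a" if "x \<in> c a" for x using that inca compset_eq c_def by metis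
      moreover have "c x = c b" if "x \<in> c b" for x using that incb compset_eq c_def by metis
      moreover have "a \<in> c a" "b \<in> c b" using aW bW inca incb by auto
      ultimately show ?thesis by blast
    qed
    ultimately show ?thesis unfolding components_compset c_def by auto
  qed
  have comp': "components W ends (insert e F) = insert (c a \<union> c b) Oth"
  proof -
    have sub: "c a \<union> c b \<subseteq> W" unfolding c_def compset_def by auto
    then have "W = (c a \<union> c b) \<union> (W - (c a \<union> c b))" by auto
    then have "c' ` W = c' ` (c a \<union> c b) \<union> c' ` (W - (c a \<union> c b))"
      by (metis image_Un)
    moreover have "c' ` (c a \<union> c b) = {c a \<union> c b}"
      using c'1 aW inca by auto
    moreover have "c' ` (W - (c a \<union> c b)) = Oth" unfolding Oth_def using c'2 by auto
    ultimately show ?thesis unfolding components_compset c'_def by auto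
  qed
  have notO: "X \<notin> Oth" if "a \<in> X \<or> b \<in> X" for X
  proof
    assume "X \<in> Oth"
    then obtain x where x: "x \<in> W" "x \<notin> c a" "x \<notin> c b" "X = c x" unfolding Oth_def by auto
    then have "(x, a) \<in> (adj ends F)\<^sup>* \<or> (x, b) \<in> (adj ends F)\<^sup>*"
      using that unfolding c_def compset_def by auto
    then show False using x inca incb by auto
  qed
  have ne: "c a \<noteq> c b" using compset_eqD[of W ends F a b] bW nab c_def by auto
  have finO: "finite Oth" unfolding Oth_def using assms(1) by simp
  have "a \<in> c a" "b \<in> c b" using aW bW inca incb by auto
  then have "card (components W ends F) = card Oth + 2"
    unfolding comp using notO ne finO by (simp add: card_insert_if)
  moreover have "card (components W ends (insert e F)) = card Oth + 1"
    unfolding comp' using notO finO \<open>a \<in> c a\<close> by (simp add: card_insert_if)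
  ultimately show ?thesis by simp
qed

lemma components_same:
  assumes "(fst (ends e), snd (ends e)) \<in> (adj ends F)\<^sup>*"
  shows "components W ends (insert e F) = components W ends F"
  unfolding components_def using rt_insert_same[OF assms] by simp

lemma rank:
  assumes "finite F" "finite W" "\<forall>e\<in>F. fst (ends e) \<in> W \<and> snd (ends e) \<in> W"
  shows "card W \<le> card (components W ends F) + card F \<and>
    (acyclic_edges ends F \<longleftrightarrow> card W = card (components W ends F) + card F)"
  using assms
proof (induction F rule: finite_induct)
  case empty
  then show ?case using components_empty[OF assms(2), of ends] acyclic_empty[of ends] by simp
next
  case (insert e F)
  then have IH: "card W \<le> card (components W ends F) + card F \<and>
    (acyclic_edges ends F \<longleftrightarrow> card W = card (components W ends F) + card F)" by simp
  show ?case
  proof (cases "(fst (ends e), snd (ends e)) \<in> (adj ends F)\<^sup>*")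
    case True
    then show ?thesis using IH components_same[OF True] not_acyclic_insert[OF True insert(2)]
      insert(1,2) by simp
  next
    case False
    have "card (components W ends (insert e F)) + 1 = card (components W ends F)"
      using components_merge[OF assms(2) _ _ False] insert(5) by simp
    then have h: "card (components W ends (insert e F)) + card (insert e F) = card (components W ends F) + card F"
      using insert(1,2) by simp
    show ?thesis unfolding h using IH acyclic_insert_iff[OF False insert(2)] by simp
  qed
qed

locale decomp =
  fixes V :: "'a set" and E :: "'b set" and ends :: "'b \<Rightarrow> 'a \<times> 'a" and R :: "'a set"
    and P :: "'i set" and PE :: "'i \<Rightarrow> 'b set" and PV :: "'i \<Rightarrow> 'a set"
  assumes graph: "graph V E ends" and R_sub: "R \<subseteq> V" and V_ne: "V \<noteq> {}"
    and finP: "finite P"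
    and PE_disj: "\<forall>S\<in>P. \<forall>S'\<in>P. S \<noteq> S' \<longrightarrow> PE S \<inter> PE S' = {}"
    and PE_cover: "(\<Union>S\<in>P. PE S) = E"
    and PV_sub: "\<forall>S\<in>P. PV S \<subseteq> V"
    and PV_cover: "(\<Union>S\<in>P. PV S) = V"
    and PV_disj: "\<forall>S\<in>P. \<forall>S'\<in>P. S \<noteq> S' \<longrightarrow> PV S \<inter> PV S' \<subseteq> R"
    and PE_ends: "\<forall>S\<in>P. \<forall>e\<in>PE S. fst (ends e) \<in> PV S \<and> snd (ends e) \<in> PV S"
    and card_RS: "\<forall>S\<in>P. card (R \<inter> PV S) = 1 \<or> card (R \<inter> PV S) = 2"
begin

definition RS where "RS S = R \<inter> PV S"
definition reach where "reach S F \<longleftrightarrow> (\<forall>x\<in>PV S. \<exists>r\<in>RS S. (x, r) \<in> (adj ends F)\<^sup>*)"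
definition rconn where "rconn S F \<longleftrightarrow> (\<forall>u\<in>RS S. \<forall>v\<in>RS S. (u, v) \<in> (adj ends F)\<^sup>*)"
definition rsep where "rsep S F \<longleftrightarrow> (\<forall>u\<in>RS S. \<forall>v\<in>RS S. u \<noteq> v \<longrightarrow> (u, v) \<notin> (adj ends F)\<^sup>*)"
definition P2 where "P2 = {S\<in>P. card (RS S) = 2}"
definition qrel where "qrel I = {(u, v). \<exists>S\<in>I. u \<in> RS S \<and> v \<in> RS S}"
definition Good where "Good I \<longleftrightarrow> I \<subseteq> P2 \<and> card I = card R - 1 \<and> (\<forall>u\<in>R. \<forall>v\<in>R. (u, v) \<in> (qrel I)\<^sup>*)"
definition Jset where "Jset T = {S\<in>P. card (RS S) = 2 \<and> rconn S (T \<inter> PE S)}"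
definition Choice where "Choice I S = {F. F \<subseteq> PE S \<and> acyclic_edges ends F \<and> reach S F \<and>
   (S \<in> I \<longrightarrow> rconn S F) \<and> (S \<notin> I \<longrightarrow> rsep S F)}"
definition rho where "rho T = {(u, v). u \<in> R \<and> v \<in> R \<and> (\<exists>S\<in>P. (u, v) \<in> (adj ends (T \<inter> PE S))\<^sup>*)}"

lemma finV: "finite V" and finE: "finite E"
  using graph unfolding graph_def by auto

lemma PE_sub: "S \<in> P \<Longrightarrow> PE S \<subseteq> E"
  using PE_cover by auto

lemma piece_of: "e \<in> E \<Longrightarrow> \<exists>S\<in>P. e \<in> PE S"
  using PE_cover by auto

lemma piece_unique: "S \<in> P \<Longrightarrow> S' \<in> P \<Longrightarrow> e \<in> PE S \<Longrightarrow> e \<in> PE S' \<Longrightarrow> S = S'"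
  using PE_disj by blast

lemma vert_unique: "S \<in> P \<Longrightarrow> S' \<in> P \<Longrightarrow> x \<in> PV S \<Longrightarrow> x \<in> PV S' \<Longrightarrow> x \<notin> R \<Longrightarrow> S = S'"
  using PV_disj by blast

lemma finPV: "S \<in> P \<Longrightarrow> finite (PV S)"
  using PV_sub finV finite_subset by blast

lemma finRS: "S \<in> P \<Longrightarrow> finite (RS S)"
  unfolding RS_def using finPV by simp

lemma RS_ne: "S \<in> P \<Longrightarrow> RS S \<noteq> {}"
  using card_RS unfolding RS_def by fastforce

lemma RS_sub: "RS S \<subseteq> PV S"
  unfolding RS_def by auto

lemma vert_piece: "x \<in> V \<Longrightarrow> \<exists>S\<in>P. x \<in> PV S"
  using PV_cover by auto

lemma R_ne: "R \<noteq> {}"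
proof -
  obtain x where "x \<in> V" using V_ne by auto
  then obtain S where "S \<in> P" "x \<in> PV S" using vert_piece by auto
  then show ?thesis using RS_ne[of S] unfolding RS_def by auto
qed

lemma card2_eq:
  assumes "S \<in> P" "u \<in> RS S" "v \<in> RS S" "u \<noteq> v"
  shows "card (RS S) = 2" "RS S = {u, v}"
proof -
  have "{u, v} \<subseteq> RS S" using assms by auto
  then have "card {u, v} \<le> card (RS S)" using finRS[OF assms(1)] card_mono by blast
  then have "2 \<le> card (RS S)" using assms(4) by simp
  then show c2: "card (RS S) = 2" using card_RS assms(1) unfolding RS_def by fastforce
  show "RS S = {u, v}"
    using card_subset_eq[OF finRS[OF assms(1)] \<open>{u, v} \<subseteq> RS S\<close>] c2 assms(4) by simp
qed

lemma card2_obtain: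
  assumes "card (RS S) = 2"
  obtains u v where "RS S = {u, v}" "u \<noteq> v"
  using assms by (metis card_2_iff)

lemma rt_within:
  assumes "S \<in> P" "F \<subseteq> PE S" "(x, y) \<in> (adj ends F)\<^sup>*" "x \<noteq> y"
  shows "x \<in> PV S \<and> y \<in> PV S"
proof -
  have ed: "(a, b) \<in> adj ends F \<Longrightarrow> a \<in> PV S \<and> b \<in> PV S" for a b
    using assms(1,2) PE_ends unfolding adj_def joins_def by fastforce
  have "(x, y) \<in> (adj ends F)\<^sup>+" using assms(3,4) by (meson rtranclD)
  then show ?thesis
  proof (induction rule: trancl_induct)
    case (base y) then show ?case using ed by simp
  next
    case (step y z) then show ?case using ed by simp
  qed
qed

lemma rt_within2:
  assumes "S \<in> P" "F \<subseteq> PE S" "(x, y) \<in> (adj ends F)\<^sup>*" "x \<in> PV S"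
  shows "y \<in> PV S"
  using rt_within[OF assms(1-3)] assms(4) by (cases "x = y") auto

lemma restrict_rt: "(x, y) \<in> (adj ends (T \<inter> PE S))\<^sup>* \<Longrightarrow> (x, y) \<in> (adj ends T)\<^sup>*"
  by (rule rt_mono[OF Int_lower1])

lemma K_inv:
  assumes "T \<subseteq> E" "u \<in> R" "(u, x) \<in> (adj ends T)\<^sup>*"
  shows "\<exists>S\<in>P. \<exists>r\<in>R. x \<in> PV S \<and> r \<in> PV S \<and> (u, r) \<in> (rho T)\<^sup>* \<and> (r, x) \<in> (adj ends (T \<inter> PE S))\<^sup>*"
  using assms(3)
proof (induction rule: rtrancl_induct)
  case base
  obtain S where "S \<in> P" "u \<in> PV S" using vert_piece assms(2) R_sub by auto
  then show ?case using assms(2) by auto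
next
  case (step x y)
  obtain S r where S: "S \<in> P" "r \<in> R" "x \<in> PV S" "r \<in> PV S" "(u, r) \<in> (rho T)\<^sup>*"
    "(r, x) \<in> (adj ends (T \<inter> PE S))\<^sup>*" using step.IH by blast
  obtain e where e: "e \<in> T" "joins ends e x y" using step.hyps(2) unfolding adj_def by auto
  obtain S' where S': "S' \<in> P" "e \<in> PE S'" using piece_of e(1) assms(1) by auto
  have "fst (ends e) \<in> PV S' \<and> snd (ends e) \<in> PV S'" using PE_ends S' by auto
  then have xy: "x \<in> PV S'" "y \<in> PV S'" using e(2) unfolding joins_def by auto
  have exy: "(x, y) \<in> adj ends (T \<inter> PE S')" using e S' unfolding adj_def by auto
  show ?case
  proof (cases "x \<in> R")
    case True
    have "(r, x) \<in> rho T" using S True unfolding rho_def by auto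
    then have "(u, x) \<in> (rho T)\<^sup>*" using S(5) by simp
    then show ?thesis using S' xy exy True by (intro bexI[of _ S'] bexI[of _ x]) auto
  next
    case False
    then have "S = S'" using vert_unique S S' xy by blast
    then have "(r, y) \<in> (adj ends (T \<inter> PE S))\<^sup>*" using S(6) exy by simp
    then show ?thesis using S \<open>S = S'\<close> xy by blast
  qed
qed

lemma K:
  assumes "T \<subseteq> E" "u \<in> R" "v \<in> R" "(u, v) \<in> (adj ends T)\<^sup>*"
  shows "(u, v) \<in> (rho T)\<^sup>*"
proof -
  obtain S r where S: "S \<in> P" "r \<in> R" "v \<in> PV S" "r \<in> PV S" "(u, r) \<in> (rho T)\<^sup>*"
    "(r, v) \<in> (adj ends (T \<inter> PE S))\<^sup>*" using K_inv[OF assms(1,2,4)] by blast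
  have "(r, v) \<in> rho T" using S assms(3) unfolding rho_def by auto
  then show ?thesis using S(5) by simp
qed

lemma rho_qrel:
  assumes "T \<subseteq> E"
  shows "rho T \<subseteq> (qrel (Jset T))\<^sup>*"
proof
  fix z assume "z \<in> rho T"
  then obtain u v S where z: "z = (u, v)" "u \<in> R" "v \<in> R" "S \<in> P" "(u, v) \<in> (adj ends (T \<inter> PE S))\<^sup>*"
    unfolding rho_def by auto
  show "z \<in> (qrel (Jset T))\<^sup>*"
  proof (cases "u = v")
    case True then show ?thesis using z by simp
  next
    case False
    have "u \<in> PV S \<and> v \<in> PV S" using rt_within[OF z(4) _ z(5) False] by auto
    then have uv: "u \<in> RS S" "v \<in> RS S" using z unfolding RS_def by auto
    have c2: "card (RS S) = 2" and eq: "RS S = {u, v}" using card2_eq[OF z(4) uv False] by auto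
    have "rconn S (T \<inter> PE S)"
      unfolding rconn_def eq using z(5) rt_sym[OF z(5)] by auto
    then have "S \<in> Jset T" unfolding Jset_def using z(4) c2 by auto
    then have "(u, v) \<in> qrel (Jset T)" unfolding qrel_def using uv by auto
    then show ?thesis using z by auto
  qed
qed

lemma qrel_rt:
  assumes "\<forall>S\<in>I. rconn S (T \<inter> PE S)" "(u, v) \<in> (qrel I)\<^sup>*"
  shows "(u, v) \<in> (adj ends T)\<^sup>*"
  using assms(2)
proof (induction rule: rtrancl_induct)
  case base then show ?case by simp
next
  case (step y z)
  then obtain S where "S \<in> I" "y \<in> RS S" "z \<in> RS S" unfolding qrel_def by auto
  then have "(y, z) \<in> (adj ends (T \<inter> PE S))\<^sup>*" using assms(1) unfolding rconn_def by auto
  then have "(y, z) \<in> (adj ends T)\<^sup>*" by (rule restrict_rt)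
  then show ?case using step.IH by (meson rtrancl_trans)
qed

lemma Jset_rconn: "\<forall>S\<in>Jset T. rconn S (T \<inter> PE S)"
  unfolding Jset_def by auto

lemma Conn:
  assumes "T \<subseteq> E" "\<forall>S\<in>P. reach S (T \<inter> PE S)"
  shows "connected_graph V T ends \<longleftrightarrow> (\<forall>u\<in>R. \<forall>v\<in>R. (u, v) \<in> (qrel (Jset T))\<^sup>*)"
proof
  assume c: "connected_graph V T ends"
  show "\<forall>u\<in>R. \<forall>v\<in>R. (u, v) \<in> (qrel (Jset T))\<^sup>*"
  proof (intro ballI)
    fix u v assume uv: "u \<in> R" "v \<in> R"
    then have "(u, v) \<in> (adj ends T)\<^sup>*" using c R_sub unfolding connected_graph_def by auto
    then have "(u, v) \<in> (rho T)\<^sup>*" using K assms(1) uv by blast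
    moreover have "(rho T)\<^sup>* \<subseteq> (qrel (Jset T))\<^sup>*"
      using rho_qrel[OF assms(1)] by (metis rtrancl_subset_rtrancl)
    ultimately show "(u, v) \<in> (qrel (Jset T))\<^sup>*" by auto
  qed
next
  assume q: "\<forall>u\<in>R. \<forall>v\<in>R. (u, v) \<in> (qrel (Jset T))\<^sup>*"
  have toR: "\<exists>r\<in>R. (x, r) \<in> (adj ends T)\<^sup>*" if xV: "x \<in> V" for x
  proof -
    obtain S where "S \<in> P" "x \<in> PV S" using vert_piece xV by auto
    then obtain r where "r \<in> RS S" "(x, r) \<in> (adj ends (T \<inter> PE S))\<^sup>*"
      using assms(2) unfolding reach_def by auto
    then show ?thesis using restrict_rt[of x r T S] unfolding RS_def by blast
  qed
  show "connected_graph V T ends"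
    unfolding connected_graph_def
  proof (intro conjI ballI)
    show "V \<noteq> {}" by (rule V_ne)
    fix x y assume "x \<in> V" "y \<in> V"
    then obtain rx ry where r: "rx \<in> R" "ry \<in> R" "(x, rx) \<in> (adj ends T)\<^sup>*" "(y, ry) \<in> (adj ends T)\<^sup>*"
      using toR by blast
    have "(rx, ry) \<in> (adj ends T)\<^sup>*" using qrel_rt[OF Jset_rconn] q r(1,2) by blast
    moreover have "(ry, y) \<in> (adj ends T)\<^sup>*" using rt_sym[OF r(4)] .
    ultimately show "(x, y) \<in> (adj ends T)\<^sup>*" using r(3) by (meson rtrancl_trans)
  qed
qed


lemma T1_inv:
  assumes "T \<subseteq> E" "S \<in> P" "x \<in> PV S" "(x, y) \<in> (adj ends T)\<^sup>*"
  shows "(y \<in> PV S \<and> (x, y) \<in> (adj ends (T \<inter> PE S))\<^sup>*) \<or> (\<exists>r\<in>RS S. (x, r) \<in> (adj ends (T \<inter> PE S))\<^sup>*)"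
  using assms(4)
proof (induction rule: rtrancl_induct)
  case base then show ?case using assms(3) by simp
next
  case (step y z)
  show ?case
  proof (cases "\<exists>r\<in>RS S. (x, r) \<in> (adj ends (T \<inter> PE S))\<^sup>*")
    case True then show ?thesis by simp
  next
    case False
    then have y: "y \<in> PV S" "(x, y) \<in> (adj ends (T \<inter> PE S))\<^sup>*" using step.IH by auto
    have yR: "y \<notin> R" using False y unfolding RS_def by auto
    obtain e where e: "e \<in> T" "joins ends e y z" using step.hyps(2) unfolding adj_def by auto
    obtain S' where S': "S' \<in> P" "e \<in> PE S'" using piece_of e(1) assms(1) by auto
    have "fst (ends e) \<in> PV S' \<and> snd (ends e) \<in> PV S'" using PE_ends S' by auto
    then have yz: "y \<in> PV S'" "z \<in> PV S'" using e(2) unfolding joins_def by auto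
    have "S' = S" using vert_unique[OF S'(1) assms(2) yz(1) y(1) yR] .
    then have "(y, z) \<in> adj ends (T \<inter> PE S)" using e S' unfolding adj_def by auto
    then have "(x, z) \<in> (adj ends (T \<inter> PE S))\<^sup>*" using y(2) by simp
    then show ?thesis using yz \<open>S' = S\<close> by simp
  qed
qed

lemma ST_pieces:
  assumes "spanning_tree V E ends T" "S \<in> P"
  shows "acyclic_edges ends (T \<inter> PE S) \<and> reach S (T \<inter> PE S)"
proof
  show "acyclic_edges ends (T \<inter> PE S)"
    using assms(1) acyclic_mono[of "T \<inter> PE S" T] unfolding spanning_tree_def by auto
  have TE: "T \<subseteq> E" using assms(1) unfolding spanning_tree_def by auto
  show "reach S (T \<inter> PE S)"
    unfolding reach_def
  proof
    fix x assume x: "x \<in> PV S"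
    obtain r where r: "r \<in> RS S" using RS_ne[OF assms(2)] by auto
    have "x \<in> V" "r \<in> V" using x r RS_sub PV_sub assms(2) by auto
    then have "(x, r) \<in> (adj ends T)\<^sup>*" using assms(1) unfolding spanning_tree_def connected_graph_def by auto
    then show "\<exists>r\<in>RS S. (x, r) \<in> (adj ends (T \<inter> PE S))\<^sup>*"
      using T1_inv[OF TE assms(2) x] r by auto
  qed
qed

lemma comps_roots:
  assumes "S \<in> P" "reach S F"
  shows "components (PV S) ends F = compset (PV S) ends F ` RS S"
proof -
  have "compset (PV S) ends F x \<in> compset (PV S) ends F ` RS S" if x: "x \<in> PV S" for x
  proof -
    obtain r where "r \<in> RS S" "(x, r) \<in> (adj ends F)\<^sup>*" using assms(2) x unfolding reach_def by auto
    then show ?thesis using compset_eq[of x r ends F "PV S"] by auto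
  qed
  moreover have "compset (PV S) ends F ` RS S \<subseteq> compset (PV S) ends F ` PV S"
    using RS_sub[of S] by (rule image_mono)
  ultimately show ?thesis unfolding components_compset by blast
qed

lemma comp_sep:
  assumes "S \<in> P" "reach S F" "rsep S F"
  shows "card (components (PV S) ends F) = card (RS S)"
proof -
  have "inj_on (compset (PV S) ends F) (RS S)"
  proof (rule inj_onI)
    fix u v assume uv: "u \<in> RS S" "v \<in> RS S" "compset (PV S) ends F u = compset (PV S) ends F v"
    then have "(u, v) \<in> (adj ends F)\<^sup>*" using compset_eqD[of "PV S" ends F u v] RS_sub by auto
    then show "u = v" using assms(3) uv unfolding rsep_def by auto
  qed
  then show ?thesis using comps_roots[OF assms(1,2)] by (simp add: card_image)
qed

lemma comp_conn:
  assumes "S \<in> P" "reach S F" "rconn S F"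
  shows "card (components (PV S) ends F) = 1"
proof -
  obtain r where r: "r \<in> RS S" using RS_ne[OF assms(1)] by auto
  have h: "compset (PV S) ends F u = compset (PV S) ends F r" if u: "u \<in> RS S" for u
  proof -
    have "(u, r) \<in> (adj ends F)\<^sup>*" using assms(3) u r unfolding rconn_def by blast
    then show ?thesis by (rule compset_eq)
  qed
  have "compset (PV S) ends F ` RS S = (\<lambda>_. compset (PV S) ends F r) ` RS S"
    by (rule image_cong) (simp_all add: h)
  also have "\<dots> = {compset (PV S) ends F r}" using r by (rule image_constant)
  finally have "compset (PV S) ends F ` RS S = {compset (PV S) ends F r}" .
  then show ?thesis using comps_roots[OF assms(1,2)] by simp
qed

lemma not_rconn_rsep:
  assumes "S \<in> P" "\<not> (card (RS S) = 2 \<and> rconn S F)"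
  shows "rsep S F"
proof (cases "card (RS S) = 2")
  case False
  then have "card (RS S) = 1" using card_RS assms(1) unfolding RS_def by auto
  then obtain r where "RS S = {r}" by (meson card_1_singletonE)
  then show ?thesis unfolding rsep_def by auto
next
  case True
  then obtain u v where uv: "RS S = {u, v}" "u \<noteq> v" by (rule card2_obtain)
  have "(u, v) \<notin> (adj ends F)\<^sup>*"
  proof
    assume h: "(u, v) \<in> (adj ends F)\<^sup>*"
    then have "rconn S F" unfolding rconn_def uv using rt_sym[OF h] by auto
    then show False using assms(2) True by simp
  qed
  then have "(v, u) \<notin> (adj ends F)\<^sup>*" using rt_sym[of v u ends F] by blast
  then show ?thesis unfolding rsep_def uv using \<open>(u, v) \<notin> (adj ends F)\<^sup>*\<close> by auto
qed

lemma piece_count: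
  assumes "S \<in> P" "F \<subseteq> PE S" "acyclic_edges ends F" "reach S F"
  shows "card F + card (RS S) = card (PV S) + (if card (RS S) = 2 \<and> rconn S F then 1 else 0)"
proof -
  have finF: "finite F" using finite_subset[OF subset_trans[OF assms(2) PE_sub[OF assms(1)]] finE] .
  have "\<forall>e\<in>F. fst (ends e) \<in> PV S \<and> snd (ends e) \<in> PV S" using PE_ends assms(1,2) by blast
  then have rk: "card (PV S) = card (components (PV S) ends F) + card F"
    using rank[OF finF finPV[OF assms(1)]] assms(3) by blast
  show ?thesis
  proof (cases "card (RS S) = 2 \<and> rconn S F")
    case True
    then show ?thesis using rk comp_conn[OF assms(1,4)] by simp
  next
    case False
    then show ?thesis using rk comp_sep[OF assms(1,4) not_rconn_rsep[OF assms(1) False]] by simp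
  qed
qed

lemma count:
  assumes "T \<subseteq> E" "\<forall>S\<in>P. acyclic_edges ends (T \<inter> PE S) \<and> reach S (T \<inter> PE S)"
  shows "card T + card R = card V + card (Jset T)"
proof -
  have Tu: "T = (\<Union>S\<in>P. T \<inter> PE S)" using assms(1) PE_cover by auto
  have cT: "card T = (\<Sum>S\<in>P. card (T \<inter> PE S))"
  proof -
    have "card (\<Union>S\<in>P. T \<inter> PE S) = (\<Sum>S\<in>P. card (T \<inter> PE S))"
    proof (rule card_UN_disjoint)
      show "finite P" by (rule finP)
      show "\<forall>S\<in>P. finite (T \<inter> PE S)" using finite_subset[OF _ finE] assms(1) by blast
      show "\<forall>S\<in>P. \<forall>S'\<in>P. S \<noteq> S' \<longrightarrow> T \<inter> PE S \<inter> (T \<inter> PE S') = {}" using PE_disj by blast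
    qed
    then show ?thesis using Tu by simp
  qed
  have pc: "(\<Sum>S\<in>P. card (T \<inter> PE S) + card (RS S)) = (\<Sum>S\<in>P. card (PV S) + (if S \<in> Jset T then 1 else 0))"
  proof (rule sum.cong)
    fix S assume S: "S \<in> P"
    show "card (T \<inter> PE S) + card (RS S) = card (PV S) + (if S \<in> Jset T then 1 else 0)"
      using piece_count[OF S _ conjunct1[OF assms(2)[rule_format, OF S]] conjunct2[OF assms(2)[rule_format, OF S]]] S
      unfolding Jset_def by auto
  qed simp
  have J: "(\<Sum>S\<in>P. (if S \<in> Jset T then 1 else 0)) = card (Jset T)"
  proof -
    have "Jset T = {S\<in>P. S \<in> Jset T}" unfolding Jset_def by auto
    then show ?thesis using sum.inter_filter[OF finP, of "\<lambda>_. 1::nat" "\<lambda>S. S \<in> Jset T"] by simp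
  qed
  have pv: "card (PV S) = card (RS S) + card (PV S - R)" if "S \<in> P" for S
    using card_Int_Diff[OF finPV[OF that], of R] unfolding RS_def by (simp add: Int_commute)
  have VR: "card (V - R) = (\<Sum>S\<in>P. card (PV S - R))"
  proof -
    have "V - R = (\<Union>S\<in>P. PV S - R)" using PV_cover by auto
    moreover have "card (\<Union>S\<in>P. PV S - R) = (\<Sum>S\<in>P. card (PV S - R))"
      by (rule card_UN_disjoint) (use finP finPV PV_disj in \<open>auto\<close>)
    ultimately show ?thesis by simp
  qed
  have VR2: "card V = card (V - R) + card R"
    using card_Int_Diff[OF finV, of R] R_sub by (simp add: Int_absorb1)
  have "card T + (\<Sum>S\<in>P. card (RS S)) = (\<Sum>S\<in>P. card (PV S)) + card (Jset T)"
    using pc J cT by (simp add: sum.distrib)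
  also have "(\<Sum>S\<in>P. card (PV S)) = (\<Sum>S\<in>P. card (RS S)) + card (V - R)"
    using pv VR by (simp add: sum.distrib)
  finally show ?thesis using VR2 by simp
qed

end

lemma comp_connected:
  assumes "connected_graph W F ends"
  shows "card (components W ends F) = 1"
proof -
  obtain w where w: "w \<in> W" using assms unfolding connected_graph_def by auto
  have "compset W ends F x = compset W ends F w" if x: "x \<in> W" for x
  proof -
    have "(x, w) \<in> (adj ends F)\<^sup>*" using assms x w unfolding connected_graph_def by auto
    then show ?thesis by (rule compset_eq)
  qed
  then have "compset W ends F ` W = (\<lambda>_. compset W ends F w) ` W"
    by (rule image_cong[OF refl])
  also have "\<dots> = {compset W ends F w}" using w by (rule image_constant)
  finally show ?thesis unfolding components_compset by simp
qed

context decomp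
begin

lemma Decomp:
  assumes "T \<subseteq> E" "\<forall>S\<in>P. acyclic_edges ends (T \<inter> PE S) \<and> reach S (T \<inter> PE S)"
  shows "spanning_tree V E ends T \<longleftrightarrow> Good (Jset T)"
proof -
  have cnt: "card T + card R = card V + card (Jset T)" using count[OF assms] .
  have reach: "\<forall>S\<in>P. reach S (T \<inter> PE S)" using assms(2) by blast
  have finT: "finite T" using finite_subset[OF assms(1) finE] .
  have endsT: "\<forall>e\<in>T. fst (ends e) \<in> V \<and> snd (ends e) \<in> V"
    using graph assms(1) unfolding graph_def by blast
  have rk: "card V \<le> card (components V ends T) + card T \<and>
    (acyclic_edges ends T \<longleftrightarrow> card V = card (components V ends T) + card T)"
    using rank[OF finT finV endsT] .
  have JP2: "Jset T \<subseteq> P2" unfolding Jset_def P2_def by auto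
  have cR: "card R \<ge> 1" using R_ne finite_subset[OF R_sub finV] by (simp add: Suc_le_eq card_gt_0_iff)
  show ?thesis
  proof
    assume st: "spanning_tree V E ends T"
    then have c: "connected_graph V T ends" and a: "acyclic_edges ends T" unfolding spanning_tree_def by auto
    have q: "\<forall>u\<in>R. \<forall>v\<in>R. (u, v) \<in> (qrel (Jset T))\<^sup>*" using Conn[OF assms(1) reach] c by blast
    have "card V = 1 + card T" using rk a comp_connected[OF c] by simp
    then have "card (Jset T) = card R - 1" using cnt by simp
    then show "Good (Jset T)" unfolding Good_def using q JP2 by blast
  next
    assume g: "Good (Jset T)"
    then have c: "connected_graph V T ends" using Conn[OF assms(1) reach] unfolding Good_def by blast
    have "card (Jset T) = card R - 1" using g unfolding Good_def by blast
    then have "card V = 1 + card T" using cnt cR by simp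
    then have "acyclic_edges ends T" using rk comp_connected[OF c] by simp
    then show "spanning_tree V E ends T" unfolding spanning_tree_def using c assms(1) by blast
  qed
qed

lemma ST_piece_iff:
  assumes "S \<in> P"
  shows "spanning_tree (PV S) (PE S) ends F \<longleftrightarrow>
    F \<subseteq> PE S \<and> acyclic_edges ends F \<and> reach S F \<and> rconn S F"
proof
  assume st: "spanning_tree (PV S) (PE S) ends F"
  then have c: "\<forall>x\<in>PV S. \<forall>y\<in>PV S. (x, y) \<in> (adj ends F)\<^sup>*"
    unfolding spanning_tree_def connected_graph_def by blast
  obtain r where r: "r \<in> RS S" using RS_ne[OF assms] by auto
  have "reach S F" unfolding reach_def using c r RS_sub by blast
  moreover have "rconn S F" unfolding rconn_def using c RS_sub by blast
  ultimately show "F \<subseteq> PE S \<and> acyclic_edges ends F \<and> reach S F \<and> rconn S F"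
    using st unfolding spanning_tree_def by blast
next
  assume h: "F \<subseteq> PE S \<and> acyclic_edges ends F \<and> reach S F \<and> rconn S F"
  have "connected_graph (PV S) F ends"
    unfolding connected_graph_def
  proof (intro conjI ballI)
    show "PV S \<noteq> {}" using RS_ne[OF assms] RS_sub by blast
    fix x y assume xy: "x \<in> PV S" "y \<in> PV S"
    obtain rx where rx: "rx \<in> RS S" "(x, rx) \<in> (adj ends F)\<^sup>*" using h xy(1) unfolding reach_def by blast
    obtain ry where ry: "ry \<in> RS S" "(y, ry) \<in> (adj ends F)\<^sup>*" using h xy(2) unfolding reach_def by blast
    have "(rx, ry) \<in> (adj ends F)\<^sup>*" using h rx(1) ry(1) unfolding rconn_def by blast
    moreover have "(ry, y) \<in> (adj ends F)\<^sup>*" using rt_sym[OF ry(2)] .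
    ultimately show "(x, y) \<in> (adj ends F)\<^sup>*" using rx(2) by (meson rtrancl_trans)
  qed
  then show "spanning_tree (PV S) (PE S) ends F" unfolding spanning_tree_def using h by blast
qed

lemma FF_iff:
  assumes "S \<in> P"
  shows "(F \<subseteq> PE S \<and> acyclic_edges ends F \<and> card (components (PV S) ends F) = card (RS S) \<and>
       (\<forall>C\<in>components (PV S) ends F. card (C \<inter> R) = 1)) \<longleftrightarrow>
    F \<subseteq> PE S \<and> acyclic_edges ends F \<and> reach S F \<and> rsep S F"
proof
  assume h: "F \<subseteq> PE S \<and> acyclic_edges ends F \<and> card (components (PV S) ends F) = card (RS S) \<and>
       (\<forall>C\<in>components (PV S) ends F. card (C \<inter> R) = 1)"
  have c1: "card (compset (PV S) ends F x \<inter> R) = 1" if "x \<in> PV S" for x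
    using h that unfolding components_compset by blast
  have "reach S F"
    unfolding reach_def
  proof
    fix x assume x: "x \<in> PV S"
    have "compset (PV S) ends F x \<inter> R \<noteq> {}" using c1[OF x] by auto
    then obtain r where "r \<in> compset (PV S) ends F x" "r \<in> R" by blast
    then show "\<exists>r\<in>RS S. (x, r) \<in> (adj ends F)\<^sup>*" unfolding compset_def RS_def by blast
  qed
  moreover have "rsep S F"
    unfolding rsep_def
  proof (intro ballI impI notI)
    fix u v assume uv: "u \<in> RS S" "v \<in> RS S" "u \<noteq> v" "(u, v) \<in> (adj ends F)\<^sup>*"
    have uP: "u \<in> PV S" "v \<in> PV S" using uv RS_sub by auto
    have "{u, v} \<subseteq> compset (PV S) ends F u \<inter> R"
      using uv uP unfolding compset_def RS_def by auto
    moreover have "finite (compset (PV S) ends F u \<inter> R)"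
      using finPV[OF assms] unfolding compset_def by simp
    ultimately have "card {u, v} \<le> card (compset (PV S) ends F u \<inter> R)" by (rule card_mono[rotated])
    then show False using c1[OF uP(1)] uv(3) by simp
  qed
  ultimately show "F \<subseteq> PE S \<and> acyclic_edges ends F \<and> reach S F \<and> rsep S F" using h by blast
next
  assume h: "F \<subseteq> PE S \<and> acyclic_edges ends F \<and> reach S F \<and> rsep S F"
  have "card (components (PV S) ends F) = card (RS S)" using comp_sep[OF assms] h by blast
  moreover have "card (C \<inter> R) = 1" if C: "C \<in> components (PV S) ends F" for C
  proof -
    obtain x where x: "x \<in> PV S" "C = compset (PV S) ends F x" using C unfolding components_compset by auto
    obtain r where r: "r \<in> RS S" "(x, r) \<in> (adj ends F)\<^sup>*" using h x(1) unfolding reach_def by blast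
    have "C \<inter> R = {r}"
    proof
      show "{r} \<subseteq> C \<inter> R" using r x RS_sub unfolding compset_def RS_def by auto
      show "C \<inter> R \<subseteq> {r}"
      proof
        fix r' assume r': "r' \<in> C \<inter> R"
        then have r'1: "r' \<in> RS S" "(x, r') \<in> (adj ends F)\<^sup>*" using x unfolding compset_def RS_def by auto
        have "(r, r') \<in> (adj ends F)\<^sup>*" using rt_sym[OF r(2)] r'1(2) by (meson rtrancl_trans)
        then have "r = r'" using h r(1) r'1(1) unfolding rsep_def by blast
        then show "r' \<in> {r}" by simp
      qed
    qed
    then show ?thesis by simp
  qed
  ultimately show "F \<subseteq> PE S \<and> acyclic_edges ends F \<and> card (components (PV S) ends F) = card (RS S) \<and>
       (\<forall>C\<in>components (PV S) ends F. card (C \<inter> R) = 1)" using h by blast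
qed

lemma card_Choice:
  assumes "S \<in> P" "I \<subseteq> P2"
  shows "card (Choice I S) = (if S \<in> I then kappa (PV S) (PE S) ends
      else F_forests (PV S) (PE S) ends R (card (RS S)))"
proof (cases "S \<in> I")
  case True
  have "Choice I S = {F. spanning_tree (PV S) (PE S) ends F}"
    unfolding Choice_def using ST_piece_iff[OF assms(1)] True by auto
  then show ?thesis using True unfolding kappa_def by simp
next
  case False
  have "Choice I S = {F. F \<subseteq> PE S \<and> acyclic_edges ends F \<and> card (components (PV S) ends F) = card (RS S) \<and>
       (\<forall>C\<in>components (PV S) ends F. card (C \<inter> R) = 1)}"
    unfolding Choice_def using FF_iff[OF assms(1)] False by auto
  then show ?thesis using False unfolding F_forests_def by simp
qed

definition Aset where "Aset I = {T. T \<subseteq> E \<and> (\<forall>S\<in>P. T \<inter> PE S \<in> Choice I S)}"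

lemma Aset_ST:
  assumes "Good I" "T \<in> Aset I"
  shows "spanning_tree V E ends T \<and> Jset T = I"
proof -
  have TE: "T \<subseteq> E" and ch: "\<forall>S\<in>P. T \<inter> PE S \<in> Choice I S" using assms(2) unfolding Aset_def by auto
  have IP2: "I \<subseteq> P2" using assms(1) unfolding Good_def by blast
  have J: "Jset T = I"
  proof
    show "I \<subseteq> Jset T"
    proof
      fix S assume S: "S \<in> I"
      then have "S \<in> P" "card (RS S) = 2" using IP2 unfolding P2_def by auto
      moreover have "rconn S (T \<inter> PE S)" using ch S \<open>S \<in> P\<close> unfolding Choice_def by blast
      ultimately show "S \<in> Jset T" unfolding Jset_def by blast
    qed
    show "Jset T \<subseteq> I"
    proof
      fix S assume S: "S \<in> Jset T"
      then have SP: "S \<in> P" and c2: "card (RS S) = 2" and rc: "rconn S (T \<inter> PE S)" unfolding Jset_def by auto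
      show "S \<in> I"
      proof (rule ccontr)
        assume "S \<notin> I"
        then have rs: "rsep S (T \<inter> PE S)" using ch SP unfolding Choice_def by blast
        obtain u v where uv: "RS S = {u, v}" "u \<noteq> v" using c2 by (rule card2_obtain)
        show False using rs rc uv unfolding rsep_def rconn_def by blast
      qed
    qed
  qed
  have "\<forall>S\<in>P. acyclic_edges ends (T \<inter> PE S) \<and> reach S (T \<inter> PE S)"
    using ch unfolding Choice_def by blast
  then have "spanning_tree V E ends T" using Decomp[OF TE] J assms(1) by simp
  then show ?thesis using J by simp
qed

lemma ST_Aset:
  assumes "spanning_tree V E ends T"
  shows "Good (Jset T) \<and> T \<in> Aset (Jset T)"
proof -
  have TE: "T \<subseteq> E" using assms unfolding spanning_tree_def by auto
  have pc: "\<forall>S\<in>P. acyclic_edges ends (T \<inter> PE S) \<and> reach S (T \<inter> PE S)"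
    using ST_pieces[OF assms] by blast
  have g: "Good (Jset T)" using Decomp[OF TE pc] assms by simp
  have "T \<inter> PE S \<in> Choice (Jset T) S" if S: "S \<in> P" for S
  proof -
    have "S \<in> Jset T \<longrightarrow> rconn S (T \<inter> PE S)" unfolding Jset_def by auto
    moreover have "S \<notin> Jset T \<longrightarrow> rsep S (T \<inter> PE S)"
      using not_rconn_rsep[OF S] S unfolding Jset_def by auto
    ultimately show ?thesis unfolding Choice_def using pc S by auto
  qed
  then show ?thesis using g TE unfolding Aset_def by auto
qed

lemma card_Aset:
  "card (Aset I) = (\<Prod>S\<in>P. card (Choice I S))"
proof -
  let ?f = "\<lambda>T. restrict (\<lambda>S. T \<inter> PE S) P"
  have "bij_betw ?f (Aset I) (PiE P (Choice I))"
  proof (rule bij_betwI')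
    fix T T' assume T: "T \<in> Aset I" and T': "T' \<in> Aset I"
    show "(?f T = ?f T') = (T = T')"
    proof
      assume eq: "?f T = ?f T'"
      have "T \<inter> PE S = T' \<inter> PE S" if "S \<in> P" for S
        using fun_cong[OF eq, of S] that by simp
      moreover have "T \<subseteq> E" "T' \<subseteq> E" using T T' unfolding Aset_def by auto
      ultimately show "T = T'" using PE_cover by blast
    qed simp
  next
    fix T assume "T \<in> Aset I"
    then show "?f T \<in> PiE P (Choice I)" unfolding Aset_def by auto
  next
    fix g assume g: "g \<in> PiE P (Choice I)"
    let ?T = "\<Union>S\<in>P. g S"
    have gsub: "g S \<subseteq> PE S" if "S \<in> P" for S using g that unfolding Choice_def by auto
    have inter: "?T \<inter> PE S = g S" if S: "S \<in> P" for S
    proof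
      show "g S \<subseteq> ?T \<inter> PE S" using gsub S by auto
      show "?T \<inter> PE S \<subseteq> g S"
      proof
        fix e assume "e \<in> ?T \<inter> PE S"
        then obtain S' where S': "S' \<in> P" "e \<in> g S'" "e \<in> PE S" by auto
        then have "e \<in> PE S'" using gsub by auto
        then have "S' = S" using piece_unique S' S by blast
        then show "e \<in> g S" using S' by simp
      qed
    qed
    have TE: "?T \<subseteq> E" using gsub PE_sub by blast
    have "?T \<in> Aset I" unfolding Aset_def using TE inter g by auto
    moreover have "g = ?f ?T"
    proof
      fix S show "g S = ?f ?T S"
        using g inter by (cases "S \<in> P") (auto simp: PiE_def extensional_def)
    qed
    ultimately show "\<exists>T\<in>Aset I. g = ?f T" by blast
  qed
  then have "card (Aset I) = card (PiE P (Choice I))" by (rule bij_betw_same_card)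
  then show ?thesis using card_PiE[OF finP] by simp
qed

lemma main_count:
  "kappa V E ends = (\<Sum>I\<in>{I. Good I}. (\<Prod>S\<in>I. kappa (PV S) (PE S) ends) *
      (\<Prod>S\<in>P - I. F_forests (PV S) (PE S) ends R (card (RS S))))"
proof -
  have finG: "finite {I. Good I}"
  proof (rule finite_subset)
    show "{I. Good I} \<subseteq> Pow P" unfolding Good_def P2_def by auto
    show "finite (Pow P)" using finP by simp
  qed
  have ST: "{T. spanning_tree V E ends T} = (\<Union>I\<in>{I. Good I}. Aset I)"
    using ST_Aset Aset_ST by blast
  have finA: "finite (Aset I)" for I
  proof (rule finite_subset)
    show "Aset I \<subseteq> Pow E" unfolding Aset_def by auto
    show "finite (Pow E)" using finE by simp
  qed
  have "card (\<Union>I\<in>{I. Good I}. Aset I) = (\<Sum>I\<in>{I. Good I}. card (Aset I))"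
  proof (rule card_UN_disjoint[OF finG])
    show "\<forall>I\<in>{I. Good I}. finite (Aset I)" using finA by blast
    show "\<forall>I\<in>{I. Good I}. \<forall>J\<in>{I. Good I}. I \<noteq> J \<longrightarrow> Aset I \<inter> Aset J = {}"
      using Aset_ST by blast
  qed
  then have "kappa V E ends = (\<Sum>I\<in>{I. Good I}. card (Aset I))"
    unfolding kappa_def ST by simp
  also have "\<dots> = (\<Sum>I\<in>{I. Good I}. (\<Prod>S\<in>I. kappa (PV S) (PE S) ends) *
      (\<Prod>S\<in>P - I. F_forests (PV S) (PE S) ends R (card (RS S))))"
  proof (rule sum.cong[OF refl])
    fix I assume "I \<in> {I. Good I}"
    then have IP2: "I \<subseteq> P2" and IP: "I \<subseteq> P" unfolding Good_def P2_def by auto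
    have "card (Aset I) = (\<Prod>S\<in>P. card (Choice I S))" by (rule card_Aset)
    also have "\<dots> = (\<Prod>S\<in>P - I. card (Choice I S)) * (\<Prod>S\<in>I. card (Choice I S))"
      by (rule prod.subset_diff[OF IP finP])
    also have "(\<Prod>S\<in>P - I. card (Choice I S)) = (\<Prod>S\<in>P - I. F_forests (PV S) (PE S) ends R (card (RS S)))"
      by (rule prod.cong[OF refl]) (use card_Choice IP2 in auto)
    also have "(\<Prod>S\<in>I. card (Choice I S)) = (\<Prod>S\<in>I. kappa (PV S) (PE S) ends)"
      by (rule prod.cong[OF refl]) (use card_Choice IP2 IP in auto)
    finally show "card (Aset I) = (\<Prod>S\<in>I. kappa (PV S) (PE S) ends) *
      (\<Prod>S\<in>P - I. F_forests (PV S) (PE S) ends R (card (RS S)))" by simp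
  qed
  finally show ?thesis .
qed

lemma adm_Good:
  assumes "spanning_tree V E ends T" "I \<subseteq> P2" "card I = card R - 1"
    "\<forall>S\<in>I. spanning_tree (PV S) (PE S) ends (T \<inter> PE S)"
  shows "Good I"
proof -
  have g: "Good (Jset T)" using ST_Aset[OF assms(1)] by blast
  have "I \<subseteq> Jset T"
  proof
    fix S assume S: "S \<in> I"
    then have SP: "S \<in> P" "card (RS S) = 2" using assms(2) unfolding P2_def by auto
    have "rconn S (T \<inter> PE S)" using ST_piece_iff[OF SP(1)] assms(4) S by blast
    then show "S \<in> Jset T" unfolding Jset_def using SP by blast
  qed
  moreover have "finite (Jset T)" using finite_subset[of "Jset T" P] finP unfolding Jset_def by auto
  moreover have "card (Jset T) = card I" using g assms(3) unfolding Good_def by simp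
  ultimately have "I = Jset T" using card_subset_eq[of "Jset T" I] by simp
  then show ?thesis using g by simp
qed

lemma Good_adm:
  assumes "Good I" "\<forall>S\<in>P. Choice I S \<noteq> {}"
  shows "\<exists>T. spanning_tree V E ends T \<and> (\<forall>S\<in>I. spanning_tree (PV S) (PE S) ends (T \<inter> PE S))"
proof -
  have "\<forall>S\<in>P. \<exists>F. F \<in> Choice I S" using assms(2) by blast
  then obtain g where g: "\<forall>S\<in>P. g S \<in> Choice I S" by metis
  let ?T = "\<Union>S\<in>P. g S"
  have gsub: "g S \<subseteq> PE S" if "S \<in> P" for S using g that unfolding Choice_def by auto
  have inter: "?T \<inter> PE S = g S" if S: "S \<in> P" for S
  proof
    show "g S \<subseteq> ?T \<inter> PE S" using gsub S by auto
    show "?T \<inter> PE S \<subseteq> g S"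
    proof
      fix e assume "e \<in> ?T \<inter> PE S"
      then obtain S' where S': "S' \<in> P" "e \<in> g S'" "e \<in> PE S" by auto
      then have "e \<in> PE S'" using gsub by auto
      then have "S' = S" using piece_unique S' S by blast
      then show "e \<in> g S" using S' by simp
    qed
  qed
  have TE: "?T \<subseteq> E" using gsub PE_sub by blast
  have A: "?T \<in> Aset I" unfolding Aset_def using TE inter g by auto
  have st: "spanning_tree V E ends ?T" using Aset_ST[OF assms(1) A] by blast
  have "spanning_tree (PV S) (PE S) ends (?T \<inter> PE S)" if S: "S \<in> I" for S
  proof -
    have SP: "S \<in> P" using S assms(1) unfolding Good_def P2_def by auto
    have "?T \<inter> PE S \<in> Choice I S" using inter[OF SP] g SP by simp
    then show ?thesis using ST_piece_iff[OF SP] S unfolding Choice_def by blast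
  qed
  then show ?thesis using st by blast
qed

end

lemma rooted_forest:
  assumes finS: "finite S" and M: "M \<subseteq> W"
    and reachS: "\<forall>x\<in>W. \<exists>r\<in>M. (x, r) \<in> (adj ends S)\<^sup>*"
  shows "\<exists>F. F \<subseteq> S \<and> acyclic_edges ends F \<and> (\<forall>x\<in>W. \<exists>r\<in>M. (x, r) \<in> (adj ends F)\<^sup>*) \<and>
    (\<forall>r\<in>M. \<forall>r'\<in>M. r \<noteq> r' \<longrightarrow> (r, r') \<notin> (adj ends F)\<^sup>*)"
proof -
  define Fam where "Fam = {F. F \<subseteq> S \<and> acyclic_edges ends F \<and> (\<forall>r\<in>M. \<forall>r'\<in>M. r \<noteq> r' \<longrightarrow> (r, r') \<notin> (adj ends F)\<^sup>*)}"
  have e0: "{} \<in> Fam"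
  proof -
    have "adj ends {} = {}" unfolding adj_def by simp
    then show ?thesis unfolding Fam_def using acyclic_empty[of ends] by simp
  qed
  have finFam: "finite Fam"
  proof (rule finite_subset)
    show "Fam \<subseteq> Pow S" unfolding Fam_def by auto
    show "finite (Pow S)" using finS by simp
  qed
  define m where "m = Max (card ` Fam)"
  have "m \<in> card ` Fam" unfolding m_def using finFam e0 by (intro Max_in) auto
  then obtain F where F: "F \<in> Fam" "card F = m" by auto
  have maxF: "card G \<le> card F" if "G \<in> Fam" for G
    using F(2) that finFam unfolding m_def by simp
  have FS: "F \<subseteq> S" and acF: "acyclic_edges ends F"
    and sepF: "\<forall>r\<in>M. \<forall>r'\<in>M. r \<noteq> r' \<longrightarrow> (r, r') \<notin> (adj ends F)\<^sup>*"
    using F(1) unfolding Fam_def by auto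
  have finF: "finite F" using finite_subset[OF FS finS] .
  have key: "\<exists>r\<in>M. (y, r) \<in> (adj ends F)\<^sup>*" if yz: "(y, z) \<in> adj ends S" and z: "\<exists>r\<in>M. (z, r) \<in> (adj ends F)\<^sup>*" for y z
  proof (rule ccontr)
    assume ny: "\<not> (\<exists>r\<in>M. (y, r) \<in> (adj ends F)\<^sup>*)"
    obtain rz where rz: "rz \<in> M" "(z, rz) \<in> (adj ends F)\<^sup>*" using z by blast
    obtain e where e: "e \<in> S" "joins ends e y z" using yz unfolding adj_def by auto
    have nyz: "(y, z) \<notin> (adj ends F)\<^sup>*"
    proof
      assume "(y, z) \<in> (adj ends F)\<^sup>*"
      then have "(y, rz) \<in> (adj ends F)\<^sup>*" using rz(2) by (meson rtrancl_trans)
      then show False using ny rz(1) by blast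
    qed
    have eF: "e \<notin> F"
    proof
      assume "e \<in> F"
      then have "(y, z) \<in> adj ends F" using e(2) unfolding adj_def by auto
      then show False using nyz by auto
    qed
    have ne: "(fst (ends e), snd (ends e)) \<notin> (adj ends F)\<^sup>*"
    proof
      assume h: "(fst (ends e), snd (ends e)) \<in> (adj ends F)\<^sup>*"
      from e(2) consider "ends e = (y, z)" | "ends e = (z, y)" unfolding joins_def by blast
      then show False
      proof cases
        case 1 then show False using h nyz by simp
      next
        case 2 then show False using rt_sym[OF h] nyz by simp
      qed
    qed
    have ac: "acyclic_edges ends (insert e F)" using acyclic_insert[OF ne acF eF] .
    have yroot: "\<exists>r\<in>M. (y, r) \<in> (adj ends F)\<^sup>*" if r: "r \<in> M" "(r, w) \<in> (adj ends F)\<^sup>*" and w: "w = y" for r w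
      using rt_sym[OF r(2)] r(1) w by blast
    have sep: "\<forall>r\<in>M. \<forall>r'\<in>M. r \<noteq> r' \<longrightarrow> (r, r') \<notin> (adj ends (insert e F))\<^sup>*"
    proof (intro ballI impI notI)
      fix r r' assume rr: "r \<in> M" "r' \<in> M" "r \<noteq> r'" "(r, r') \<in> (adj ends (insert e F))\<^sup>*"
      from rt_insert[OF rr(4)] sepF rr(1-3) consider
        "(r, fst (ends e)) \<in> (adj ends F)\<^sup>*" "(snd (ends e), r') \<in> (adj ends F)\<^sup>*"
        | "(r, snd (ends e)) \<in> (adj ends F)\<^sup>*" "(fst (ends e), r') \<in> (adj ends F)\<^sup>*"
        by blast
      then show False
      proof cases
        case 1
        from e(2) consider "ends e = (y, z)" | "ends e = (z, y)" unfolding joins_def by blast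
        then show False
        proof cases
          case a: 1 then show False using yroot[OF rr(1) 1(1)] ny by simp
        next
          case a: 2 then show False using 1(2) rr(2) ny by auto
        qed
      next
        case 2
        from e(2) consider "ends e = (y, z)" | "ends e = (z, y)" unfolding joins_def by blast
        then show False
        proof cases
          case a: 1 then show False using 2(2) rr(2) ny by auto
        next
          case a: 2 then show False using yroot[OF rr(1) 2(1)] ny by simp
        qed
      qed
    qed
    have "insert e F \<in> Fam" unfolding Fam_def using ac sep FS e(1) by auto
    then have "card (insert e F) \<le> card F" by (rule maxF)
    then show False using eF finF by simp
  qed
  have reachF: "\<forall>x\<in>W. \<exists>r\<in>M. (x, r) \<in> (adj ends F)\<^sup>*"
  proof
    fix x assume x: "x \<in> W"
    obtain r where r: "r \<in> M" "(x, r) \<in> (adj ends S)\<^sup>*" using reachS x by blast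
    have "\<exists>r\<in>M. (y, r) \<in> (adj ends F)\<^sup>*" if "(y, r) \<in> (adj ends S)\<^sup>*" for y
      using that
    proof (induction rule: converse_rtrancl_induct)
      case base then show ?case using r(1) by blast
    next
      case (step y z)
      then show ?case using key by blast
    qed
    then show "\<exists>r\<in>M. (x, r) \<in> (adj ends F)\<^sup>*" using r(2) by blast
  qed
  show ?thesis using FS acF reachF sepF by blast
qed

lemma rtrancl_map_inj:
  assumes "inj f"
  shows "(f a, f b) \<in> (map_prod f f ` Q)\<^sup>* \<longleftrightarrow> (a, b) \<in> Q\<^sup>*"
proof
  assume h: "(f a, f b) \<in> (map_prod f f ` Q)\<^sup>*"
  have "\<exists>b. y = f b \<and> (a, b) \<in> Q\<^sup>*" if "(f a, y) \<in> (map_prod f f ` Q)\<^sup>*" for y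
    using that
  proof (induction rule: rtrancl_induct)
    case base then show ?case by blast
  next
    case (step y z)
    then obtain b where b: "y = f b" "(a, b) \<in> Q\<^sup>*" by blast
    obtain c d where cd: "(c, d) \<in> Q" "(y, z) = (f c, f d)" using step.hyps(2) by auto
    then have "c = b" using b(1) assms by (simp add: inj_eq)
    then have "(a, d) \<in> Q\<^sup>*" using b(2) cd(1) by simp
    then show ?case using cd(2) by auto
  qed
  then obtain b' where "f b = f b'" "(a, b') \<in> Q\<^sup>*" using h by blast
  then show "(a, b) \<in> Q\<^sup>*" using assms by (simp add: inj_eq)
next
  assume "(a, b) \<in> Q\<^sup>*"
  then show "(f a, f b) \<in> (map_prod f f ` Q)\<^sup>*"
  proof (induction rule: rtrancl_induct)
    case base then show ?case by simp
  next
    case (step y z)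
    then have "(f y, f z) \<in> map_prod f f ` Q" by force
    then show ?case using step.IH by simp
  qed
qed

lemma verts_iff: "x \<in> verts ends F \<longleftrightarrow> (\<exists>e\<in>F. x = fst (ends e) \<or> x = snd (ends e))"
  unfolding verts_def by auto

lemma walk_sub: "is_walk E ends vs es \<Longrightarrow> set es \<subseteq> E"
  unfolding is_walk_def by (auto simp: in_set_conv_nth)

lemma walk_reach:
  assumes "is_walk E ends vs es" "i \<le> length es"
  shows "(vs ! 0, vs ! i) \<in> (adj ends (set es))\<^sup>*"
  using assms(2)
proof (induction i)
  case 0 then show ?case by simp
next
  case (Suc i)
  then have i: "i < length es" by simp
  then have "joins ends (es ! i) (vs ! i) (vs ! Suc i)" using assms(1) unfolding is_walk_def by blast
  moreover have "es ! i \<in> set es" using i by simp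
  ultimately have "(vs ! i, vs ! Suc i) \<in> adj ends (set es)" unfolding adj_def by blast
  then show ?case using Suc.IH i by simp
qed

lemma walk_edge_vert:
  assumes "is_walk E ends vs es" "x \<in> verts ends (set es)"
  shows "\<exists>i\<le>length es. x = vs ! i"
proof -
  obtain e where e: "e \<in> set es" "x = fst (ends e) \<or> x = snd (ends e)" using assms(2) verts_iff by metis
  then obtain j where j: "j < length es" "e = es ! j" by (auto simp: in_set_conv_nth)
  then have "joins ends e (vs ! j) (vs ! Suc j)" using assms(1) unfolding is_walk_def by blast
  then have "x = vs ! j \<or> x = vs ! Suc j" using e(2) unfolding joins_def by auto
  then show ?thesis using j(1) by (metis Suc_leI less_imp_le)
qed

lemma walk_hd: "is_walk E ends vs es \<Longrightarrow> hd vs = vs ! 0"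
  unfolding is_walk_def by (cases vs) auto

lemma walk_last:
  assumes "is_walk E ends vs es" shows "last vs = vs ! length es"
proof -
  have l: "length vs = Suc (length es)" using assms unfolding is_walk_def by simp
  then have "vs \<noteq> []" by auto
  then show ?thesis using l by (simp add: last_conv_nth)
qed

lemma path_vertex:
  assumes w: "is_walk E ends vs es" and int: "\<forall>i. 0 < i \<and> i < length es \<longrightarrow> vs ! i \<notin> R"
    and x: "x \<in> verts ends (set es)"
  shows "(hd vs, x) \<in> (adj ends (set es))\<^sup>* \<and> (x \<in> R \<longrightarrow> x = hd vs \<or> x = last vs)"
proof -
  obtain i where i: "i \<le> length es" "x = vs ! i" using walk_edge_vert[OF w x] by blast
  have "(hd vs, x) \<in> (adj ends (set es))\<^sup>*" using walk_reach[OF w i(1)] i(2) walk_hd[OF w] by simp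
  moreover have "x \<in> R \<longrightarrow> x = hd vs \<or> x = last vs"
  proof
    assume "x \<in> R"
    then have "\<not> (0 < i \<and> i < length es)" using int i by blast
    then have "i = 0 \<or> i = length es" using i(1) by auto
    then show "x = hd vs \<or> x = last vs" using i(2) walk_hd[OF w] walk_last[OF w] by auto
  qed
  ultimately show ?thesis by blast
qed

lemma path_ends_in:
  assumes w: "is_walk E ends vs es" and ne: "es \<noteq> []"
  shows "hd vs \<in> verts ends (set es) \<and> last vs \<in> verts ends (set es)"
proof -
  have l: "0 < length es" using ne by simp
  have "joins ends (es ! 0) (vs ! 0) (vs ! Suc 0)" using w l unfolding is_walk_def by blast
  moreover have "es ! 0 \<in> set es" using l by simp
  ultimately have h: "vs ! 0 \<in> verts ends (set es)" unfolding verts_iff joins_def by force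
  have l2: "length es - 1 < length es" using l by simp
  have "joins ends (es ! (length es - 1)) (vs ! (length es - 1)) (vs ! Suc (length es - 1))"
    using w l2 unfolding is_walk_def by blast
  moreover have "Suc (length es - 1) = length es" using l by simp
  ultimately have j: "joins ends (es ! (length es - 1)) (vs ! (length es - 1)) (vs ! length es)" by simp
  have m: "es ! (length es - 1) \<in> set es" using l2 by simp
  have "vs ! length es \<in> verts ends (set es)" unfolding verts_iff
    using j m unfolding joins_def by (intro bexI[of _ "es ! (length es - 1)"]) auto
  then show ?thesis using h walk_hd[OF w] walk_last[OF w] by simp
qed

lemma group_mem: "A \<in> P \<Longrightarrow> B \<in> path_group P A \<Longrightarrow> B \<in> P"
  unfolding path_group_def
  by (auto elim: rtranclE simp: share_rel_def)

lemma group_self: "A \<in> path_group P A"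
  unfolding path_group_def by simp

lemma verts_group: "x \<in> verts ends (group_edges G) \<longleftrightarrow> (\<exists>B\<in>G. x \<in> verts ends (set (snd B)))"
  unfolding verts_iff group_edges_def by blast

lemma AP2_D:
  assumes "A \<in> AP2 E ends R"
  shows "is_walk E ends (fst A) (snd A) \<and> snd A \<noteq> [] \<and> hd (fst A) \<in> R \<and> last (fst A) \<in> R \<and>
    hd (fst A) \<noteq> last (fst A) \<and> (\<forall>i. 0 < i \<and> i < length (snd A) \<longrightarrow> fst A ! i \<notin> R)"
  using assms unfolding AP2_def by (cases A) auto

lemma APc_D:
  assumes "A \<in> APc E ends R"
  shows "is_walk E ends (fst A) (snd A) \<and> snd A \<noteq> [] \<and> hd (fst A) \<in> R \<and> last (fst A) = hd (fst A) \<and>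
    (\<forall>i. 0 < i \<and> i < length (snd A) \<longrightarrow> fst A ! i \<notin> R)"
  using assms unfolding APc_def by (cases A) auto

lemma AP1_D: "A \<in> AP1 E ends R \<Longrightarrow> A \<in> APc E ends R"
  unfolding AP1_def by auto

lemma sd_D1: "segment_decomposition V E ends R \<Longrightarrow>
  (\<forall>A\<in>AP2 E ends R. \<forall>B\<in>path_group (AP2 E ends R) A. path_ends B = path_ends A)"
  unfolding segment_decomposition_def by (elim conjE) assumption
lemma sd_D2: "segment_decomposition V E ends R \<Longrightarrow>
  (\<forall>A\<in>AP1 E ends R. \<forall>B\<in>path_group (AP1 E ends R) A. hd (fst B) = hd (fst A))"
  unfolding segment_decomposition_def by (elim conjE) assumption
lemma sd_D3: "segment_decomposition V E ends R \<Longrightarrow>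
  (\<forall>S\<in>segs E ends R. \<forall>S'\<in>segs E ends R. S \<noteq> S' \<longrightarrow>
         S \<inter> S' = {} \<and> verts ends S \<inter> verts ends S' \<subseteq> R)"
  unfolding segment_decomposition_def by (elim conjE) assumption
lemma sd_D4: "segment_decomposition V E ends R \<Longrightarrow> \<Union>(segs E ends R) = E"
  unfolding segment_decomposition_def by (elim conjE) assumption
lemma sd_D5: "segment_decomposition V E ends R \<Longrightarrow> \<Union>(verts ends ` segs E ends R) = V"
  unfolding segment_decomposition_def by (elim conjE) assumption

lemma seg2_facts:
  assumes sd: "segment_decomposition V E ends R" and A: "A \<in> AP2 E ends R"
    and S: "S = group_edges (path_group (AP2 E ends R) A)"
  shows "S \<subseteq> E" "R \<inter> verts ends S = {hd (fst A), last (fst A)}"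
    "\<forall>x\<in>verts ends S. (x, hd (fst A)) \<in> (adj ends S)\<^sup>*" "hd (fst A) \<noteq> last (fst A)"
proof -
  let ?G = "path_group (AP2 E ends R) A"
  have pe: "\<forall>B\<in>?G. path_ends B = path_ends A" using sd_D1[OF sd] A by blast
  have Bm: "B \<in> AP2 E ends R" if "B \<in> ?G" for B using group_mem[OF A that] .
  have sub: "set (snd B) \<subseteq> S" if "B \<in> ?G" for B using that S unfolding group_edges_def by auto
  show "S \<subseteq> E"
  proof
    fix e assume "e \<in> S"
    then obtain B where B: "B \<in> ?G" "e \<in> set (snd B)" using S unfolding group_edges_def by auto
    then show "e \<in> E" using walk_sub AP2_D[OF Bm[OF B(1)]] by blast
  qed
  have DA: "is_walk E ends (fst A) (snd A) \<and> snd A \<noteq> [] \<and> hd (fst A) \<in> R \<and> last (fst A) \<in> R \<and>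
    hd (fst A) \<noteq> last (fst A) \<and> (\<forall>i. 0 < i \<and> i < length (snd A) \<longrightarrow> fst A ! i \<notin> R)"
    using AP2_D[OF A] .
  then show "hd (fst A) \<noteq> last (fst A)" by blast
  have AG: "A \<in> ?G" by (rule group_self)
  have Aends: "hd (fst A) \<in> verts ends (set (snd A)) \<and> last (fst A) \<in> verts ends (set (snd A))"
    using path_ends_in DA by blast
  have hl: "(hd (fst A), last (fst A)) \<in> (adj ends S)\<^sup>*"
  proof -
    have "(hd (fst A), last (fst A)) \<in> (adj ends (set (snd A)))\<^sup>*"
      using path_vertex[of E ends "fst A" "snd A" R "last (fst A)"] DA Aends by blast
    then show ?thesis using rt_mono[OF sub[OF AG], of "hd (fst A)" "last (fst A)" ends] by blast
  qed
  have vx: "(hd (fst A), x) \<in> (adj ends S)\<^sup>* \<and> (x \<in> R \<longrightarrow> x = hd (fst A) \<or> x = last (fst A))"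
    if x: "x \<in> verts ends S" for x
  proof -
    obtain B where B: "B \<in> ?G" "x \<in> verts ends (set (snd B))" using x S verts_group by metis
    have DB: "is_walk E ends (fst B) (snd B) \<and> (\<forall>i. 0 < i \<and> i < length (snd B) \<longrightarrow> fst B ! i \<notin> R)"
      using AP2_D[OF Bm[OF B(1)]] by blast
    have pv: "(hd (fst B), x) \<in> (adj ends (set (snd B)))\<^sup>* \<and> (x \<in> R \<longrightarrow> x = hd (fst B) \<or> x = last (fst B))"
      using path_vertex[of E ends "fst B" "snd B" R x] DB B(2) by blast
    have peB: "{hd (fst B), last (fst B)} = {hd (fst A), last (fst A)}"
      using pe B(1) unfolding path_ends_def by blast
    have r1: "(hd (fst B), x) \<in> (adj ends S)\<^sup>*" using rt_mono[OF sub[OF B(1)], of "hd (fst B)" x ends] pv by blast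
    have "hd (fst B) = hd (fst A) \<or> hd (fst B) = last (fst A)" using peB by blast
    then have "(hd (fst A), hd (fst B)) \<in> (adj ends S)\<^sup>*" using hl by auto
    then have "(hd (fst A), x) \<in> (adj ends S)\<^sup>*" using r1 by (meson rtrancl_trans)
    moreover have "x \<in> R \<longrightarrow> x = hd (fst A) \<or> x = last (fst A)" using pv peB by blast
    ultimately show ?thesis by blast
  qed
  show "\<forall>x\<in>verts ends S. (x, hd (fst A)) \<in> (adj ends S)\<^sup>*"
  proof
    fix x assume "x \<in> verts ends S"
    then have "(hd (fst A), x) \<in> (adj ends S)\<^sup>*" using vx by blast
    then show "(x, hd (fst A)) \<in> (adj ends S)\<^sup>*" by (rule rt_sym)
  qed
  have "verts ends (set (snd A)) \<subseteq> verts ends S" using sub[OF AG] unfolding verts_def by blast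
  then show "R \<inter> verts ends S = {hd (fst A), last (fst A)}" using vx DA Aends by blast
qed

lemma seg1_facts:
  assumes sd: "segment_decomposition V E ends R" and A: "A \<in> AP1 E ends R"
    and S: "S = group_edges (path_group (AP1 E ends R) A)"
  shows "S \<subseteq> E" "R \<inter> verts ends S = {hd (fst A)}"
    "\<forall>x\<in>verts ends S. (x, hd (fst A)) \<in> (adj ends S)\<^sup>*"
proof -
  let ?G = "path_group (AP1 E ends R) A"
  have pe: "\<forall>B\<in>?G. hd (fst B) = hd (fst A)" using sd_D2[OF sd] A by blast
  have Bm: "B \<in> APc E ends R" if "B \<in> ?G" for B using AP1_D[OF group_mem[OF A that]] .
  have sub: "set (snd B) \<subseteq> S" if "B \<in> ?G" for B using that S unfolding group_edges_def by auto
  show "S \<subseteq> E"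
  proof
    fix e assume "e \<in> S"
    then obtain B where B: "B \<in> ?G" "e \<in> set (snd B)" using S unfolding group_edges_def by auto
    then show "e \<in> E" using walk_sub APc_D[OF Bm[OF B(1)]] by blast
  qed
  have AG: "A \<in> ?G" by (rule group_self)
  have DA: "is_walk E ends (fst A) (snd A) \<and> snd A \<noteq> [] \<and> hd (fst A) \<in> R \<and> last (fst A) = hd (fst A) \<and>
    (\<forall>i. 0 < i \<and> i < length (snd A) \<longrightarrow> fst A ! i \<notin> R)" using APc_D[OF Bm[OF AG]] .
  have Aends: "hd (fst A) \<in> verts ends (set (snd A))"
    using path_ends_in DA by blast
  have vx: "(hd (fst A), x) \<in> (adj ends S)\<^sup>* \<and> (x \<in> R \<longrightarrow> x = hd (fst A))"
    if x: "x \<in> verts ends S" for x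
  proof -
    obtain B where B: "B \<in> ?G" "x \<in> verts ends (set (snd B))" using x S verts_group by metis
    have DB: "is_walk E ends (fst B) (snd B) \<and> last (fst B) = hd (fst B) \<and> (\<forall>i. 0 < i \<and> i < length (snd B) \<longrightarrow> fst B ! i \<notin> R)"
      using APc_D[OF Bm[OF B(1)]] by blast
    have pv: "(hd (fst B), x) \<in> (adj ends (set (snd B)))\<^sup>* \<and> (x \<in> R \<longrightarrow> x = hd (fst B) \<or> x = last (fst B))"
      using path_vertex[of E ends "fst B" "snd B" R x] DB B(2) by blast
    have r1: "(hd (fst B), x) \<in> (adj ends S)\<^sup>*" using rt_mono[OF sub[OF B(1)], of "hd (fst B)" x ends] pv by blast
    then show ?thesis using pv pe B(1) DB by auto
  qed
  show "\<forall>x\<in>verts ends S. (x, hd (fst A)) \<in> (adj ends S)\<^sup>*"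
  proof
    fix x assume "x \<in> verts ends S"
    then have "(hd (fst A), x) \<in> (adj ends S)\<^sup>*" using vx by blast
    then show "(x, hd (fst A)) \<in> (adj ends S)\<^sup>*" by (rule rt_sym)
  qed
  have "verts ends (set (snd A)) \<subseteq> verts ends S" using sub[OF AG] unfolding verts_def by blast
  then show "R \<inter> verts ends S = {hd (fst A)}" using vx DA Aends by blast
qed

lemma seg_facts:
  assumes sd: "segment_decomposition V E ends R" and S: "S \<in> segs E ends R"
  shows "S \<subseteq> E" "\<exists>h\<in>R \<inter> verts ends S. \<forall>x\<in>verts ends S. (x, h) \<in> (adj ends S)\<^sup>*"
    "S \<in> seg2 E ends R \<Longrightarrow> card (R \<inter> verts ends S) = 2"
    "S \<notin> seg2 E ends R \<Longrightarrow> card (R \<inter> verts ends S) = 1"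
proof -
  have "(S \<subseteq> E \<and> (\<exists>h\<in>R \<inter> verts ends S. \<forall>x\<in>verts ends S. (x, h) \<in> (adj ends S)\<^sup>*)) \<and>
     (if S \<in> seg2 E ends R then card (R \<inter> verts ends S) = 2 else card (R \<inter> verts ends S) = 1)"
  proof (cases "S \<in> seg2 E ends R")
    case True
    then obtain A where A: "A \<in> AP2 E ends R" "S = group_edges (path_group (AP2 E ends R) A)"
      unfolding seg2_def by auto
    note f = seg2_facts[OF sd A]
    have "hd (fst A) \<in> R \<inter> verts ends S" using f(2) by blast
    then show ?thesis using f True by auto
  next
    case False
    then have "S \<in> seg1 E ends R" using S unfolding segs_def by auto
    then obtain A where A: "A \<in> AP1 E ends R" "S = group_edges (path_group (AP1 E ends R) A)"
      unfolding seg1_def by auto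
    note f = seg1_facts[OF sd A]
    have "hd (fst A) \<in> R \<inter> verts ends S" using f(2) by blast
    then show ?thesis using f False by auto
  qed
  then show "S \<subseteq> E" "\<exists>h\<in>R \<inter> verts ends S. \<forall>x\<in>verts ends S. (x, h) \<in> (adj ends S)\<^sup>*"
    "S \<in> seg2 E ends R \<Longrightarrow> card (R \<inter> verts ends S) = 2"
    "S \<notin> seg2 E ends R \<Longrightarrow> card (R \<inter> verts ends S) = 1" by auto
qed

lemma segs_finite:
  assumes sd: "segment_decomposition V E ends R" and g: "graph V E ends"
  shows "finite (segs E ends R)"
proof (rule finite_subset)
  show "segs E ends R \<subseteq> Pow E" using seg_facts(1)[OF sd] by blast
  show "finite (Pow E)" using g unfolding graph_def by simp
qed

lemma X_decomp:
  assumes g: "graph V E ends" and c: "connected_graph V E ends" and RV: "R \<subseteq> V"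
    and sd: "segment_decomposition V E ends R"
  shows "decomp V E ends R (segs E ends R) (\<lambda>S. S) (verts ends)"
proof unfold_locales
  show "graph V E ends" by (rule g)
  show "R \<subseteq> V" by (rule RV)
  show "V \<noteq> {}" using c unfolding connected_graph_def by blast
  show "finite (segs E ends R)" by (rule segs_finite[OF sd g])
  show "\<forall>S\<in>segs E ends R. \<forall>S'\<in>segs E ends R. S \<noteq> S' \<longrightarrow> S \<inter> S' = {}"
    using sd_D3[OF sd] by blast
  show "(\<Union>S\<in>segs E ends R. S) = E"
    using sd_D4[OF sd] by simp
  show "\<forall>S\<in>segs E ends R. verts ends S \<subseteq> V"
    using seg_facts(1)[OF sd] g unfolding graph_def verts_def by blast
  show "(\<Union>S\<in>segs E ends R. verts ends S) = V"
    using sd_D5[OF sd] by simp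
  show "\<forall>S\<in>segs E ends R. \<forall>S'\<in>segs E ends R. S \<noteq> S' \<longrightarrow> verts ends S \<inter> verts ends S' \<subseteq> R"
    using sd_D3[OF sd] by blast
  show "\<forall>S\<in>segs E ends R. \<forall>e\<in>S. fst (ends e) \<in> verts ends S \<and> snd (ends e) \<in> verts ends S"
    unfolding verts_def by blast
  show "\<forall>S\<in>segs E ends R. card (R \<inter> verts ends S) = 1 \<or> card (R \<inter> verts ends S) = 2"
    using seg_facts(3,4)[OF sd] by blast
qed

lemma fst_cls: "fst (cls R p n v g) = v"
  unfolding cls_def by simp

lemma cls_R: "v \<in> R \<Longrightarrow> cls R p n v g = (v, 0)"
  unfolding cls_def by simp

lemma cls_in:
  assumes "0 < p" "v \<in> V"
  shows "cls R p n v g \<in> cover_V V R p n"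
proof -
  have "cls R p n v g = cls R p n v (g mod p ^ n)" unfolding cls_def by simp
  moreover have "g mod p ^ n < p ^ n" using assms(1) by simp
  ultimately show ?thesis unfolding cover_V_def using assms(2) by blast
qed

lemma cover_V_fst: "x \<in> cover_V V R p n \<Longrightarrow> fst x \<in> V"
  unfolding cover_V_def by (auto simp: fst_cls)

lemma Rn_eq:
  assumes "R \<subseteq> V" "0 < p"
  shows "{x \<in> cover_V V R p n. fst x \<in> R} = (\<lambda>r. (r, 0::nat)) ` R"
proof
  show "{x \<in> cover_V V R p n. fst x \<in> R} \<subseteq> (\<lambda>r. (r, 0::nat)) ` R"
  proof
    fix x assume x: "x \<in> {x \<in> cover_V V R p n. fst x \<in> R}"
    then obtain v g where vg: "x = cls R p n v g" unfolding cover_V_def by auto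
    then have "v \<in> R" using x by (simp add: fst_cls)
    then have "x = (v, 0)" using vg cls_R by metis
    then show "x \<in> (\<lambda>r. (r, 0::nat)) ` R" using \<open>v \<in> R\<close> by blast
  qed
  show "(\<lambda>r. (r, 0::nat)) ` R \<subseteq> {x \<in> cover_V V R p n. fst x \<in> R}"
  proof
    fix x assume "x \<in> (\<lambda>r. (r, 0::nat)) ` R"
    then obtain r where r: "r \<in> R" "x = (r, 0)" by auto
    then have "x = cls R p n r 0" using cls_R by metis
    moreover have "r \<in> V" using r assms(1) by auto
    ultimately show "x \<in> {x \<in> cover_V V R p n. fst x \<in> R}" using cls_in[OF assms(2), of r V R n 0] r
      by (simp add: fst_cls)
  qed
qed

lemma RSn:
  assumes "R \<subseteq> V" "0 < p"
  shows "{x \<in> cover_V V R p n. fst x \<in> R} \<inter> seg_cover_V V ends R p n S = (\<lambda>r. (r, 0::nat)) ` (R \<inter> verts ends S)"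
proof -
  have "{x \<in> cover_V V R p n. fst x \<in> R} \<inter> seg_cover_V V ends R p n S =
     {x \<in> {x \<in> cover_V V R p n. fst x \<in> R}. fst x \<in> verts ends S}"
    unfolding seg_cover_V_def by auto
  also have "\<dots> = {x \<in> (\<lambda>r. (r, 0::nat)) ` R. fst x \<in> verts ends S}" using Rn_eq[OF assms] by simp
  also have "\<dots> = (\<lambda>r. (r, 0::nat)) ` (R \<inter> verts ends S)" by auto
  finally show ?thesis .
qed

lemma finite_cover_V:
  assumes "finite V"
  shows "finite (cover_V V R p n)"
proof (rule finite_subset)
  show "cover_V V R p n \<subseteq> (\<lambda>(v, g). cls R p n v g) ` (V \<times> {..<p ^ n})"
    unfolding cover_V_def by auto
  show "finite ((\<lambda>(v, g). cls R p n v g) ` (V \<times> {..<p ^ n}))" using assms by simp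
qed

lemma Xn_decomp:
  assumes g: "graph V E ends" and c: "connected_graph V E ends" and RV: "R \<subseteq> V"
    and sd: "segment_decomposition V E ends R" and p: "0 < p"
  shows "decomp (cover_V V R p n) (cover_E E p n) (cover_ends ends R \<alpha> p n)
    {x \<in> cover_V V R p n. fst x \<in> R} (segs E ends R) (\<lambda>S. cover_E S p n) (seg_cover_V V ends R p n)"
proof unfold_locales
  have finV: "finite V" and finE: "finite E" and eV: "\<forall>e\<in>E. fst (ends e) \<in> V \<and> snd (ends e) \<in> V"
    using g unfolding graph_def by auto
  have ce: "cover_ends ends R \<alpha> p n (e, h) = (cls R p n (fst (ends e)) h, cls R p n (snd (ends e)) (h + \<alpha> e n))" for e h
    unfolding cover_ends_def by simp
  show "graph (cover_V V R p n) (cover_E E p n) (cover_ends ends R \<alpha> p n)"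
    unfolding graph_def
  proof (intro conjI ballI)
    show "finite (cover_V V R p n)" using finite_cover_V[OF finV] .
    show "finite (cover_E E p n)" unfolding cover_E_def using finE by simp
    fix x assume x: "x \<in> cover_E E p n"
    then obtain e h where eh: "x = (e, h)" "e \<in> E" unfolding cover_E_def by auto
    have ev: "fst (ends e) \<in> V" "snd (ends e) \<in> V" using eV eh(2) by auto
    show "fst (cover_ends ends R \<alpha> p n x) \<in> cover_V V R p n"
      using eh ce cls_in[OF p ev(1), of R n h] by simp
    show "snd (cover_ends ends R \<alpha> p n x) \<in> cover_V V R p n"
      using eh ce cls_in[OF p ev(2), of R n "h + \<alpha> e n"] by simp
  qed
  show "{x \<in> cover_V V R p n. fst x \<in> R} \<subseteq> cover_V V R p n" by auto
  show "cover_V V R p n \<noteq> {}"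
  proof -
    obtain v where "v \<in> V" using c unfolding connected_graph_def by auto
    then show ?thesis using cls_in[OF p, of v V R n 0] by auto
  qed
  show "finite (segs E ends R)" by (rule segs_finite[OF sd g])
  show "\<forall>S\<in>segs E ends R. \<forall>S'\<in>segs E ends R. S \<noteq> S' \<longrightarrow> cover_E S p n \<inter> cover_E S' p n = {}"
    using sd_D3[OF sd] unfolding cover_E_def by blast
  show "(\<Union>S\<in>segs E ends R. cover_E S p n) = cover_E E p n"
    using sd_D4[OF sd] unfolding cover_E_def by blast
  show "\<forall>S\<in>segs E ends R. seg_cover_V V ends R p n S \<subseteq> cover_V V R p n"
    unfolding seg_cover_V_def by auto
  show "(\<Union>S\<in>segs E ends R. seg_cover_V V ends R p n S) = cover_V V R p n"
  proof
    show "(\<Union>S\<in>segs E ends R. seg_cover_V V ends R p n S) \<subseteq> cover_V V R p n"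
      unfolding seg_cover_V_def by auto
    show "cover_V V R p n \<subseteq> (\<Union>S\<in>segs E ends R. seg_cover_V V ends R p n S)"
    proof
      fix x assume x: "x \<in> cover_V V R p n"
      then have "fst x \<in> V" by (rule cover_V_fst)
      then obtain S where "S \<in> segs E ends R" "fst x \<in> verts ends S" using sd_D5[OF sd] by auto
      then show "x \<in> (\<Union>S\<in>segs E ends R. seg_cover_V V ends R p n S)"
        using x unfolding seg_cover_V_def by auto
    qed
  qed
  show "\<forall>S\<in>segs E ends R. \<forall>S'\<in>segs E ends R. S \<noteq> S' \<longrightarrow>
     seg_cover_V V ends R p n S \<inter> seg_cover_V V ends R p n S' \<subseteq> {x \<in> cover_V V R p n. fst x \<in> R}"
    using sd_D3[OF sd] unfolding seg_cover_V_def by blast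
  show "\<forall>S\<in>segs E ends R. \<forall>e\<in>cover_E S p n. fst (cover_ends ends R \<alpha> p n e) \<in> seg_cover_V V ends R p n S \<and>
     snd (cover_ends ends R \<alpha> p n e) \<in> seg_cover_V V ends R p n S"
  proof (intro ballI)
    fix S x assume S: "S \<in> segs E ends R" and x: "x \<in> cover_E S p n"
    then obtain e h where eh: "x = (e, h)" "e \<in> S" unfolding cover_E_def by auto
    have eE: "e \<in> E" using seg_facts(1)[OF sd S] eh(2) by blast
    have "fst (ends e) \<in> verts ends S" "snd (ends e) \<in> verts ends S" using eh(2) unfolding verts_def by auto
    then show "fst (cover_ends ends R \<alpha> p n x) \<in> seg_cover_V V ends R p n S \<and>
     snd (cover_ends ends R \<alpha> p n x) \<in> seg_cover_V V ends R p n S"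
    proof -
      have ev: "fst (ends e) \<in> V" "snd (ends e) \<in> V" using eV eE by auto
      show ?thesis unfolding seg_cover_V_def using eh ce cls_in[OF p ev(1), of R n h]
        cls_in[OF p ev(2), of R n "h + \<alpha> e n"] \<open>fst (ends e) \<in> verts ends S\<close> \<open>snd (ends e) \<in> verts ends S\<close>
        by (simp add: fst_cls)
    qed
  qed
  show "\<forall>S\<in>segs E ends R. card ({x \<in> cover_V V R p n. fst x \<in> R} \<inter> seg_cover_V V ends R p n S) = 1 \<or>
     card ({x \<in> cover_V V R p n. fst x \<in> R} \<inter> seg_cover_V V ends R p n S) = 2"
  proof
    fix S assume S: "S \<in> segs E ends R"
    have "card ({x \<in> cover_V V R p n. fst x \<in> R} \<inter> seg_cover_V V ends R p n S) = card (R \<inter> verts ends S)"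
      unfolding RSn[OF RV p] by (rule card_image) (auto simp: inj_on_def)
    then show "card ({x \<in> cover_V V R p n. fst x \<in> R} \<inter> seg_cover_V V ends R p n S) = 1 \<or>
     card ({x \<in> cover_V V R p n. fst x \<in> R} \<inter> seg_cover_V V ends R p n S) = 2"
      using seg_facts(3,4)[OF sd S] by auto
  qed
qed

lemma FF_cong:
  assumes "W \<inter> Rv = W \<inter> Rv'"
  shows "F_forests W Es ends Rv t = F_forests W Es ends Rv' t"
proof -
  have "C \<inter> Rv = C \<inter> Rv'" if "C \<in> components W ends F" for C F
  proof -
    have "C \<subseteq> W" using that unfolding components_def by auto
    then show ?thesis using assms by blast
  qed
  then show ?thesis unfolding F_forests_def by (metis (no_types, lifting))
qed

lemma qrel_map:
  "{(u, v). \<exists>S\<in>I. u \<in> f ` A S \<and> v \<in> f ` A S} = map_prod f f ` {(u, v). \<exists>S\<in>I. u \<in> A S \<and> v \<in> A S}"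
  by force

theorem theorem5p23:
  fixes V :: "'v set" and E :: "'e set" and ends :: "'e \<Rightarrow> 'v \<times> 'v"
    and R :: "'v set" and p :: nat and \<alpha> :: "'e \<Rightarrow> nat \<Rightarrow> nat" and n :: nat
  assumes "graph V E ends"
    and "connected_graph V E ends"
    and "R \<subseteq> V"
    and "\<not> has_tail V E ends R"
    and "segment_decomposition V E ends R"
    and "prime p"
    and "\<forall>e\<in>E. zp_elem p (\<alpha> e)"
    and "\<forall>m. connected_graph (cover_V V R p m) (cover_E E p m) (cover_ends ends R \<alpha> p m)"
  shows "kappa (cover_V V R p n) (cover_E E p n) (cover_ends ends R \<alpha> p n) =
    (\<Sum>I\<in>{I. admissible V E ends R I}.
        (\<Prod>S\<in>I. kappa (seg_cover_V V ends R p n S) (cover_E S p n) (cover_ends ends R \<alpha> p n)) *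
        (\<Prod>S\<in>segs E ends R - I.
            F_forests (seg_cover_V V ends R p n S) (cover_E S p n) (cover_ends ends R \<alpha> p n)
              {x. fst x \<in> R} (card (R \<inter> verts ends S))))"
proof -
  have p: "0 < p" using assms(6) prime_gt_0_nat by blast
  have finE: "finite E" using assms(1) unfolding graph_def by simp
  interpret X: decomp V E ends R "segs E ends R" "\<lambda>S. S" "verts ends"
    by (rule X_decomp[OF assms(1,2,3,5)])
  interpret N: decomp "cover_V V R p n" "cover_E E p n" "cover_ends ends R \<alpha> p n"
    "{x \<in> cover_V V R p n. fst x \<in> R}" "segs E ends R" "\<lambda>S. cover_E S p n" "seg_cover_V V ends R p n"
    by (rule Xn_decomp[OF assms(1,2,3,5) p])
  define f where "f = (\<lambda>r::'v. (r, 0::nat))"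
  have injf: "inj f" unfolding f_def inj_def by simp
  have NRS: "N.RS S = f ` X.RS S" for S
    unfolding N.RS_def X.RS_def f_def by (rule RSn[OF assms(3) p])
  have cardNRS: "card (N.RS S) = card (X.RS S)" for S
    unfolding NRS by (rule card_image[OF inj_on_subset[OF injf subset_UNIV]])
  have P2eq: "N.P2 = X.P2" unfolding N.P2_def X.P2_def cardNRS ..
  have XP2: "X.P2 = seg2 E ends R"
  proof
    show "X.P2 \<subseteq> seg2 E ends R"
      unfolding X.P2_def X.RS_def using seg_facts(4)[OF assms(5)] by fastforce
    show "seg2 E ends R \<subseteq> X.P2"
      unfolding X.P2_def X.RS_def using seg_facts(3)[OF assms(5)] unfolding segs_def by blast
  qed
  have Rn: "{x \<in> cover_V V R p n. fst x \<in> R} = f ` R" using Rn_eq[OF assms(3) p] unfolding f_def .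
  have cardRn: "card {x \<in> cover_V V R p n. fst x \<in> R} = card R"
    unfolding Rn by (rule card_image[OF inj_on_subset[OF injf subset_UNIV]])
  have qmap: "N.qrel I = map_prod f f ` X.qrel I" for I
    unfolding N.qrel_def X.qrel_def NRS by (rule qrel_map)
  have NG: "N.Good I \<longleftrightarrow> X.Good I" for I
  proof -
    have "(\<forall>u\<in>f ` R. \<forall>v\<in>f ` R. (u, v) \<in> (map_prod f f ` X.qrel I)\<^sup>*) \<longleftrightarrow>
        (\<forall>u\<in>R. \<forall>v\<in>R. (u, v) \<in> (X.qrel I)\<^sup>*)"
      using rtrancl_map_inj[OF injf, of _ _ "X.qrel I"] by simp
    then show ?thesis unfolding N.Good_def X.Good_def P2eq cardRn qmap
      by (simp only: Rn)
  qed
  have adm: "admissible V E ends R I \<longleftrightarrow> X.Good I" for I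
  proof
    assume a: "admissible V E ends R I"
    then obtain T where I2: "I \<subseteq> seg2 E ends R" and cI: "card I = card R - 1"
      and st: "spanning_tree V E ends T" and pc: "\<forall>S\<in>I. spanning_tree (verts ends S) S ends (T \<inter> S)"
      unfolding admissible_def by blast
    show "X.Good I" using X.adm_Good[OF st] I2 cI pc XP2 by simp
  next
    assume g: "X.Good I"
    have ne: "\<forall>S\<in>segs E ends R. X.Choice I S \<noteq> {}"
    proof
      fix S assume S: "S \<in> segs E ends R"
      have finS: "finite S" using finite_subset[OF seg_facts(1)[OF assms(5) S] finE] .
      obtain h where h: "h \<in> R \<inter> verts ends S" "\<forall>x\<in>verts ends S. (x, h) \<in> (adj ends S)\<^sup>*"
        using seg_facts(2)[OF assms(5) S] by blast
      show "X.Choice I S \<noteq> {}"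
      proof (cases "S \<in> I")
        case True
        have "\<exists>F. F \<subseteq> S \<and> acyclic_edges ends F \<and> (\<forall>x\<in>verts ends S. \<exists>r\<in>{h}. (x, r) \<in> (adj ends F)\<^sup>*) \<and>
          (\<forall>r\<in>{h}. \<forall>r'\<in>{h}. r \<noteq> r' \<longrightarrow> (r, r') \<notin> (adj ends F)\<^sup>*)"
          by (rule rooted_forest[OF finS]) (use h in auto)
        then obtain F where F: "F \<subseteq> S" "acyclic_edges ends F" "\<forall>x\<in>verts ends S. (x, h) \<in> (adj ends F)\<^sup>*"
          by auto
        have "X.rconn S F" unfolding X.rconn_def X.RS_def
        proof (intro ballI)
          fix u v assume "u \<in> R \<inter> verts ends S" "v \<in> R \<inter> verts ends S"
          then have "(u, h) \<in> (adj ends F)\<^sup>*" "(v, h) \<in> (adj ends F)\<^sup>*" using F(3) by auto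
          then show "(u, v) \<in> (adj ends F)\<^sup>*" using rt_sym[of v h ends F] by (meson rtrancl_trans)
        qed
        moreover have "X.reach S F" unfolding X.reach_def X.RS_def using F(3) h(1) by blast
        ultimately have "F \<in> X.Choice I S" unfolding X.Choice_def using F True by blast
        then show ?thesis by blast
      next
        case False
        have "\<exists>F. F \<subseteq> S \<and> acyclic_edges ends F \<and> (\<forall>x\<in>verts ends S. \<exists>r\<in>R \<inter> verts ends S. (x, r) \<in> (adj ends F)\<^sup>*) \<and>
          (\<forall>r\<in>R \<inter> verts ends S. \<forall>r'\<in>R \<inter> verts ends S. r \<noteq> r' \<longrightarrow> (r, r') \<notin> (adj ends F)\<^sup>*)"
          by (rule rooted_forest[OF finS]) (use h in auto)
        then obtain F where F: "F \<subseteq> S" "acyclic_edges ends F" "\<forall>x\<in>verts ends S. \<exists>r\<in>R \<inter> verts ends S. (x, r) \<in> (adj ends F)\<^sup>*"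
          "\<forall>r\<in>R \<inter> verts ends S. \<forall>r'\<in>R \<inter> verts ends S. r \<noteq> r' \<longrightarrow> (r, r') \<notin> (adj ends F)\<^sup>*"
          by blast
        have "F \<in> X.Choice I S" unfolding X.Choice_def X.reach_def X.rsep_def X.RS_def using F False by blast
        then show ?thesis by blast
      qed
    qed
    obtain T where T: "spanning_tree V E ends T" "\<forall>S\<in>I. spanning_tree (verts ends S) S ends (T \<inter> S)"
      using X.Good_adm[OF g ne] by auto
    show "admissible V E ends R I" unfolding admissible_def
      using g T XP2 unfolding X.Good_def by blast
  qed
  have sets: "{I. admissible V E ends R I} = {I. N.Good I}" using adm NG by auto
  have ffeq: "F_forests (seg_cover_V V ends R p n S) (cover_E S p n) (cover_ends ends R \<alpha> p n)
      {x \<in> cover_V V R p n. fst x \<in> R} (card (N.RS S)) =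
    F_forests (seg_cover_V V ends R p n S) (cover_E S p n) (cover_ends ends R \<alpha> p n)
      {x. fst x \<in> R} (card (R \<inter> verts ends S))" for S
  proof -
    have c: "card (N.RS S) = card (R \<inter> verts ends S)" using cardNRS[of S] unfolding X.RS_def .
    have "seg_cover_V V ends R p n S \<inter> {x \<in> cover_V V R p n. fst x \<in> R} =
        seg_cover_V V ends R p n S \<inter> {x. fst x \<in> R}" unfolding seg_cover_V_def by auto
    then show ?thesis unfolding c by (rule FF_cong)
  qed
  have "kappa (cover_V V R p n) (cover_E E p n) (cover_ends ends R \<alpha> p n) =
    (\<Sum>I\<in>{I. N.Good I}. (\<Prod>S\<in>I. kappa (seg_cover_V V ends R p n S) (cover_E S p n) (cover_ends ends R \<alpha> p n)) *
      (\<Prod>S\<in>segs E ends R - I. F_forests (seg_cover_V V ends R p n S) (cover_E S p n) (cover_ends ends R \<alpha> p n)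
         {x \<in> cover_V V R p n. fst x \<in> R} (card (N.RS S))))"
    by (rule N.main_count)
  also have "\<dots> = (\<Sum>I\<in>{I. admissible V E ends R I}.
        (\<Prod>S\<in>I. kappa (seg_cover_V V ends R p n S) (cover_E S p n) (cover_ends ends R \<alpha> p n)) *
        (\<Prod>S\<in>segs E ends R - I.
            F_forests (seg_cover_V V ends R p n S) (cover_E S p n) (cover_ends ends R \<alpha> p n)
              {x. fst x \<in> R} (card (R \<inter> verts ends S))))"
    unfolding sets ffeq ..
  finally show ?thesis .
qed

end
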